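(* Let $G$ be any digraph and let $s_n$ ($n\ge1$) be the associative spectrum of its graph algebra $\mathbb{A}(G)$. Then exactly one of the following three cases occurs: (i) $s_n=1$ for all $n$, i.e. $\mathbb{A}(G)$ satisfies $x_1(x_2x_3)\approx(x_1x_2)x_3$; (ii) $s_n=2$ for all $n\ge3$; this holds if and only if each weakly connected component of $G$ is either associative (its graph algebra satisfies $x_1(x_2x_3)\approx(x_1x_2)x_3$) or a directed bipartite graph with at least one edge, and the latter occurs for at least one component; (iii) in all other cases, $s_n\ge|R_{n-1}|$ for all $n\ge3$, where $|R_{n-1}|=\Theta(\alpha^n)$ and $\alpha\approx1.755$ is the unique positive root of $x^4-x^3-x^2-1$.
   Context: Digraphs $G=(V,E)$ have $E\subseteq V\times V$, loops allowed, possibly infinite. The graph algebra $\mathbb{A}(G)$ is the groupoid on $V\cup\{\infty\}$ ($\infty\notin V$) with $xy=x$ if $x,y\in V$ and $(x,y)\in E$, and $xy=\infty$ otherwise. $B_n$ is the set of bracketings of size $n$: binary terms in which $x_1,\dots,x_n$ each occur exactly once, in this order. The associative spectrum $s_n$ of a groupoid is the number of distinct $n$-ary term operations induced by the bracketings in $B_n$ (always $s_1=s_2=1$). The weakly connected components of $G$ are its induced subgraphs on the vertex sets of connected components of the underlying undirected graph. A directed bipartite graph is a digraph whose vertex set is partitioned as $V_1\cup V_2$ with $E\subseteq V_1\times V_2$. For $n\ge2$, $R_n$ is the set of words of length $n$ over $\{0,1\}$ that do not start with $01$, do not end with $10$, and do not contain $101$ as a factor. $\Theta(\alpha^n)$ means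 bounded between $c_1\alpha^n$ and $c_2\alpha^n$ for some positive constants $c_1,c_2$. *)

theory Defs
  imports Complex_Main "HOL-Library.FuncSet" "HOL-Library.Landau_Symbols"
begin

text \<open>The graph algebra has carrier
  V together with a fresh element infinity; we model it on the type 'v option, with
  None playing the role of infinity and Some v the vertex v.\<close>

definition ga_carrier :: "'v set \<Rightarrow> 'v option set" where
  "ga_carrier V = insert None (Some ` V)"

fun ga_op :: "('v \<times> 'v) set \<Rightarrow> 'v option \<Rightarrow> 'v option \<Rightarrow> 'v option" where
  "ga_op E (Some x) (Some y) = (if (x, y) \<in> E then Some x else None)"
| "ga_op E _ _ = None"

datatype btree = Leaf | Node btree btree

fun leaves :: "btree \<Rightarrow> nat" where
  "leaves Leaf = 1"
| "leaves (Node l r) = leaves l + leaves r"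

text \<open>Bracketings of size n: binary terms with n leaves, the variables x_1..x_n
  being placed at the leaves in left-to-right order.\<close>
definition bracketings :: "nat \<Rightarrow> btree set" where
  "bracketings n = {t. leaves t = n}"

fun beval :: "('a \<Rightarrow> 'a \<Rightarrow> 'a) \<Rightarrow> btree \<Rightarrow> 'a list \<Rightarrow> 'a" where
  "beval f Leaf xs = hd xs"
| "beval f (Node l r) xs =
     f (beval f l (take (leaves l) xs)) (beval f r (drop (leaves l) xs))"

definition term_op :: "'a set \<Rightarrow> ('a \<Rightarrow> 'a \<Rightarrow> 'a) \<Rightarrow> nat \<Rightarrow> btree \<Rightarrow> ('a list \<Rightarrow> 'a)" where
  "term_op A f n t = restrict (beval f t) {xs. length xs = n \<and> set xs \<subseteq> A}"

definition assoc_spectrum :: "'a set \<Rightarrow> ('a \<Rightarrow> 'a \<Rightarrow> 'a) \<Rightarrow> nat \<Rightarrow> nat" where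
  "assoc_spectrum A f n = card (term_op A f n ` bracketings n)"

definition associative_on :: "'a set \<Rightarrow> ('a \<Rightarrow> 'a \<Rightarrow> 'a) \<Rightarrow> bool" where
  "associative_on A f \<longleftrightarrow> (\<forall>x\<in>A. \<forall>y\<in>A. \<forall>z\<in>A. f x (f y z) = f (f x y) z)"

definition weak_component :: "'v set \<Rightarrow> ('v \<times> 'v) set \<Rightarrow> 'v \<Rightarrow> 'v set" where
  "weak_component V E v = {u \<in> V. (v, u) \<in> (E \<union> E\<inverse>)\<^sup>*}"

definition weak_components :: "'v set \<Rightarrow> ('v \<times> 'v) set \<Rightarrow> 'v set set" where
  "weak_components V E = weak_component V E ` V"

definition induced_edges :: "('v \<times> 'v) set \<Rightarrow> 'v set \<Rightarrow> ('v \<times> 'v) set" where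
  "induced_edges E C = E \<inter> (C \<times> C)"

definition directed_bipartite :: "'v set \<Rightarrow> ('v \<times> 'v) set \<Rightarrow> bool" where
  "directed_bipartite V E \<longleftrightarrow>
     (\<exists>V1 V2. V1 \<union> V2 = V \<and> V1 \<inter> V2 = {} \<and> E \<subseteq> V1 \<times> V2)"

text \<open>Words over {0,1} are bool lists (False = 0, True = 1).\<close>
definition R_words :: "nat \<Rightarrow> bool list set" where
  "R_words n = {w. length w = n
      \<and> \<not> (\<exists>u. w = [False, True] @ u)
      \<and> \<not> (\<exists>u. w = u @ [True, False])
      \<and> \<not> (\<exists>u v. w = u @ [True, False, True] @ v)}"

end

theory Submission
  imports Defs
begin

lemma leaves_pos: "leaves t \<ge> 1"
  by (induction t) auto

lemma leaves_pos'[simp]: "leaves t \<noteq> 0" "0 < leaves t"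
  using leaves_pos[of t] by auto

fun gh :: "('v \<times> 'v) set \<Rightarrow> btree \<Rightarrow> 'v list \<Rightarrow> bool" where
  "gh E Leaf xs = True"
| "gh E (Node l r) xs = (gh E l (take (leaves l) xs) \<and> gh E r (drop (leaves l) xs)
      \<and> (hd xs, hd (drop (leaves l) xs)) \<in> E)"

lemma beval_Some:
  "length xs = leaves t \<Longrightarrow>
   beval (ga_op E) t (map Some xs) = (if gh E t xs then Some (hd xs) else None)"
proof (induction t arbitrary: xs)
  case Leaf
  then show ?case by (cases xs) auto
next
  case (Node l r)
  have l1: "leaves l \<ge> 1" "leaves r \<ge> 1" using leaves_pos[of l] leaves_pos[of r] by auto
  have "length (take (leaves l) xs) = leaves l" using Node.prems by simp
  note IHl = Node.IH(1)[OF this]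
  have "length (drop (leaves l) xs) = leaves r" using Node.prems by simp
  note IHr = Node.IH(2)[OF this]
  have hd1: "hd (take (leaves l) xs) = hd xs" using l1 Node.prems
    by (cases xs) auto
  show ?case
    using IHl IHr hd1 by (simp add: take_map drop_map)
qed

lemma beval_None:
  "length ys = leaves t \<Longrightarrow> None \<in> set ys \<Longrightarrow> beval (ga_op E) t ys = None"
proof (induction t arbitrary: ys)
  case Leaf
  then show ?case by (cases ys) auto
next
  case (Node l r)
  have "None \<in> set (take (leaves l) ys) \<or> None \<in> set (drop (leaves l) ys)"
    using Node.prems(2) by (metis append_take_drop_id Un_iff set_append)
  then show ?case
  proof
    assume "None \<in> set (take (leaves l) ys)"
    then have "beval (ga_op E) l (take (leaves l) ys) = None"
      using Node.IH(1) Node.prems by simp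
    then show ?thesis by simp
  next
    assume "None \<in> set (drop (leaves l) ys)"
    then have "beval (ga_op E) r (drop (leaves l) ys) = None"
      using Node.IH(2) Node.prems by simp
    then show ?thesis by (cases "beval (ga_op E) l (take (leaves l) ys)") auto
  qed
qed

lemma opeq:
  assumes "leaves t = n" "leaves t' = n"
  shows "(term_op (ga_carrier V) (ga_op E) n t = term_op (ga_carrier V) (ga_op E) n t')
     \<longleftrightarrow> (\<forall>xs. length xs = n \<and> set xs \<subseteq> V \<longrightarrow> (gh E t xs \<longleftrightarrow> gh E t' xs))"
proof
  assume eq: "term_op (ga_carrier V) (ga_op E) n t = term_op (ga_carrier V) (ga_op E) n t'"
  show "\<forall>xs. length xs = n \<and> set xs \<subseteq> V \<longrightarrow> (gh E t xs \<longleftrightarrow> gh E t' xs)"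
  proof (intro allI impI)
    fix xs :: "'a list" assume xs: "length xs = n \<and> set xs \<subseteq> V"
    have dom: "map Some xs \<in> {xs. length xs = n \<and> set xs \<subseteq> ga_carrier V}"
      using xs by (auto simp: ga_carrier_def)
    have "beval (ga_op E) t (map Some xs) = beval (ga_op E) t' (map Some xs)"
      using fun_cong[OF eq, of "map Some xs"] dom by (simp add: term_op_def)
    then show "gh E t xs \<longleftrightarrow> gh E t' xs"
      using beval_Some[of xs t E] beval_Some[of xs t' E] xs assms
      by (auto split: if_splits)
  qed
next
  assume H: "\<forall>xs. length xs = n \<and> set xs \<subseteq> V \<longrightarrow> (gh E t xs \<longleftrightarrow> gh E t' xs)"
  show "term_op (ga_carrier V) (ga_op E) n t = term_op (ga_carrier V) (ga_op E) n t'"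
    unfolding term_op_def
  proof (rule restrict_ext)
    fix ys assume ys: "ys \<in> {xs. length xs = n \<and> set xs \<subseteq> ga_carrier V}"
    show "beval (ga_op E) t ys = beval (ga_op E) t' ys"
    proof (cases "None \<in> set ys")
      case True
      then show ?thesis using beval_None ys assms by (metis (mono_tags, lifting) mem_Collect_eq)
    next
      case False
      define xs where "xs = map the ys"
      have ysx: "ys = map Some xs" unfolding xs_def using False
        by (induction ys) auto
      have "set xs \<subseteq> V" using ys unfolding ysx by (auto simp: ga_carrier_def)
      moreover have "length xs = n" using ys ysx by simp
      ultimately show ?thesis using H beval_Some[of xs t E] beval_Some[of xs t' E] assms ysx
        by simp
    qed
  qed
qed

lemma assoc_char:
  "associative_on (ga_carrier C) (ga_op F) \<longleftrightarrow>
   (\<forall>x\<in>C. \<forall>y\<in>C. \<forall>z\<in>C. (x,y) \<in> F \<longrightarrow> ((y,z) \<in> F \<longleftrightarrow> (x,z) \<in> F))"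
proof
  assume a: "associative_on (ga_carrier C) (ga_op F)"
  show "\<forall>x\<in>C. \<forall>y\<in>C. \<forall>z\<in>C. (x,y) \<in> F \<longrightarrow> ((y,z) \<in> F \<longleftrightarrow> (x,z) \<in> F)"
  proof (intro ballI impI)
    fix x y z assume xyz: "x \<in> C" "y \<in> C" "z \<in> C" "(x,y) \<in> F"
    have "ga_op F (Some x) (ga_op F (Some y) (Some z)) = ga_op F (ga_op F (Some x) (Some y)) (Some z)"
      using a xyz unfolding associative_on_def ga_carrier_def by blast
    then show "(y,z) \<in> F \<longleftrightarrow> (x,z) \<in> F" using xyz by (auto split: if_splits)
  qed
next
  assume a: "\<forall>x\<in>C. \<forall>y\<in>C. \<forall>z\<in>C. (x,y) \<in> F \<longrightarrow> ((y,z) \<in> F \<longleftrightarrow> (x,z) \<in> F)"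
  show "associative_on (ga_carrier C) (ga_op F)"
    unfolding associative_on_def
  proof (intro ballI)
    fix x y z assume xyz: "x \<in> ga_carrier C" "y \<in> ga_carrier C" "z \<in> ga_carrier C"
    show "ga_op F x (ga_op F y z) = ga_op F (ga_op F x y) z"
    proof (cases x)
      case None then show ?thesis by simp
    next
      case (Some x')
      show ?thesis
      proof (cases y)
        case None then show ?thesis using Some by simp
      next
        case (Some y')
        show ?thesis
        proof (cases z)
          case None then show ?thesis using \<open>x = Some x'\<close> Some by (cases "(x',y') \<in> F") auto
        next
          case (Some z')
          have "x' \<in> C" "y' \<in> C" "z' \<in> C" using xyz \<open>x = Some x'\<close> \<open>y = Some y'\<close> Some
            by (auto simp: ga_carrier_def)
          then have "(x',y') \<in> F \<Longrightarrow> ((y',z') \<in> F \<longleftrightarrow> (x',z') \<in> F)" using a by blast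
          then show ?thesis using \<open>x = Some x'\<close> \<open>y = Some y'\<close> Some by auto
        qed
      qed
    qed
  qed
qed

lemma finite_brack: "finite (bracketings n)"
  unfolding bracketings_def
proof (induction n rule: less_induct)
  case (less n)
  have sub: "{t. leaves t = n} \<subseteq> {Leaf} \<union> (\<Union>k\<in>{1..<n}. (\<lambda>(l,r). Node l r) ` ({l. leaves l = k} \<times> {r. leaves r = n - k}))"
  proof
    fix t assume "t \<in> {t. leaves t = n}"
    then show "t \<in> {Leaf} \<union> (\<Union>k\<in>{1..<n}. (\<lambda>(l,r). Node l r) ` ({l. leaves l = k} \<times> {r. leaves r = n - k}))"
    proof (cases t)
      case (Node l r)
      have "leaves l \<ge> 1" "leaves r \<ge> 1" using leaves_pos[of l] leaves_pos[of r] by auto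
      then show ?thesis using Node \<open>t \<in> _\<close> by (auto intro!: bexI[of _ "leaves l"])
    qed auto
  qed
  show ?case
    by (rule finite_subset[OF sub]) (auto intro!: finite_cartesian_product less.IH)
qed

fun lcomb :: "nat \<Rightarrow> btree" where
  "lcomb 0 = Leaf"
| "lcomb (Suc k) = Node (lcomb k) Leaf"

lemma leaves_lcomb[simp]: "leaves (lcomb k) = Suc k"
  by (induction k) auto

definition star :: "('v \<times> 'v) set \<Rightarrow> 'v list \<Rightarrow> bool" where
  "star E xs \<longleftrightarrow> (\<forall>x\<in>set (tl xs). (hd xs, x) \<in> E)"

lemma set_tl_split:
  assumes "1 \<le> k" "k \<le> length xs"
  shows "set (tl xs) = set (tl (take k xs)) \<union> set (drop k xs)"
proof (cases xs)
  case Nil then show ?thesis by simp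
next
  case (Cons a as)
  have "set as = set (take (k-1) as) \<union> set (drop (k-1) as)"
    by (metis append_take_drop_id set_append)
  then show ?thesis using Cons assms by (cases k) auto
qed

lemma hd_take[simp]: "0 < k \<Longrightarrow> hd (take k xs) = hd xs"
  by (cases xs; cases k) auto

lemma gh_lcomb: "length xs = Suc k \<Longrightarrow> gh E (lcomb k) xs \<longleftrightarrow> star E xs"
proof (induction k arbitrary: xs)
  case 0
  then show ?case by (cases xs) (auto simp: star_def)
next
  case (Suc k)
  have IH: "gh E (lcomb k) (take (Suc k) xs) \<longleftrightarrow> star E (take (Suc k) xs)"
    using Suc by simp
  obtain z where z: "drop (Suc k) xs = [z]" using Suc.prems
    by (metis Suc_diff_Suc length_0_conv length_drop diff_self_eq_0 length_Suc_conv lessI)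
  have st: "set (tl xs) = set (tl (take (Suc k) xs)) \<union> set (drop (Suc k) xs)"
    using set_tl_split[of "Suc k" xs] Suc.prems by simp
  show ?case using IH z st by (auto simp: star_def)
qed

fun is_lc :: "btree \<Rightarrow> bool" where
  "is_lc Leaf = True"
| "is_lc (Node l r) = (r = Leaf \<and> is_lc l)"

lemma is_lc_eq: "is_lc t \<Longrightarrow> t = lcomb (leaves t - 1)"
proof (induction t)
  case (Node l r)
  then have a: "l = lcomb (leaves l - 1)" "r = Leaf" by auto
  obtain k where k: "leaves l = Suc k" using leaves_pos[of l] by (cases "leaves l") auto
  show ?case using a k by simp
qed simp

lemma hom_assoc:
  assumes D: "\<forall>x\<in>D. \<forall>y z. (x,y) \<in> E \<longrightarrow> y \<in> D \<and> ((y,z) \<in> E \<longleftrightarrow> (x,z) \<in> E)"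
  shows "hd xs \<in> D \<Longrightarrow> length xs = leaves t \<Longrightarrow> gh E t xs \<longleftrightarrow> star E xs"
proof (induction t arbitrary: xs)
  case Leaf
  then show ?case by (cases xs) (auto simp: star_def)
next
  case (Node l r)
  define xs1 where "xs1 = take (leaves l) xs"
  define xs2 where "xs2 = drop (leaves l) xs"
  have len1: "length xs1 = leaves l" and len2: "length xs2 = leaves r"
    using Node.prems by (auto simp: xs1_def xs2_def)
  have hd1: "hd xs1 = hd xs" by (simp add: xs1_def)
  have IHl: "gh E l xs1 \<longleftrightarrow> star E xs1" using Node.IH(1)[of xs1] Node.prems hd1 len1 by simp
  have st: "set (tl xs) = set (tl xs1) \<union> set xs2"
    using set_tl_split[of "leaves l" xs] Node.prems leaves_pos[of l] by (simp add: xs1_def xs2_def)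
  obtain y0 ys where xs2c: "xs2 = y0 # ys" using len2 leaves_pos[of r]
    by (cases xs2) auto
  show ?case
  proof (cases "(hd xs, y0) \<in> E")
    case True
    then have "y0 \<in> D" using D Node.prems by blast
    then have IHr: "gh E r xs2 \<longleftrightarrow> star E xs2" using Node.IH(2)[of xs2] len2 xs2c by simp
    have eqv: "\<And>x. (y0,x) \<in> E \<longleftrightarrow> (hd xs, x) \<in> E"
      using D Node.prems(1) True by blast
    have "star E xs2 \<longleftrightarrow> (\<forall>x\<in>set ys. (hd xs, x) \<in> E)"
      using xs2c eqv unfolding star_def by simp
    have g: "gh E (Node l r) xs \<longleftrightarrow> gh E l xs1 \<and> gh E r xs2 \<and> (hd xs, y0) \<in> E"
      using xs2c by (simp add: xs1_def[symmetric] xs2_def[symmetric])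
    have s2: "star E xs \<longleftrightarrow> star E xs1 \<and> (hd xs, y0) \<in> E \<and> (\<forall>x\<in>set ys. (hd xs, x) \<in> E)"
      using st xs2c hd1 unfolding star_def by auto
    show ?thesis using g s2 IHl IHr \<open>star E xs2 \<longleftrightarrow> _\<close> True by blast
  next
    case False
    then show ?thesis using xs2c st by (simp add: star_def xs1_def[symmetric] xs2_def[symmetric])
  qed
qed

lemma twopath:
  "\<not> is_lc t \<Longrightarrow> length xs = leaves t \<Longrightarrow> gh E t xs \<Longrightarrow> \<exists>a b. (hd xs, a) \<in> E \<and> (a, b) \<in> E"
proof (induction t arbitrary: xs)
  case Leaf then show ?case by simp
next
  case (Node l r)
  show ?case
  proof (cases r)
    case Leaf
    then have "\<not> is_lc l" using Node.prems by simp
    then show ?thesis using Node.IH(1)[of "take (leaves l) xs"] Node.prems by auto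
  next
    case (Node r1 r2)
    then show ?thesis using Node.prems by auto
  qed
qed

locale dg =
  fixes V :: "'v set" and E :: "('v \<times> 'v) set"
  assumes EV: "E \<subseteq> V \<times> V"
begin

abbreviation "sp \<equiv> assoc_spectrum (ga_carrier V) (ga_op E)"
abbreviation "opn n t \<equiv> term_op (ga_carrier V) (ga_op E) n t"

definition comp :: "'v \<Rightarrow> 'v set" where "comp x = weak_component V E x"
definition "assocC C \<longleftrightarrow> associative_on (ga_carrier C) (ga_op (induced_edges E C))"
definition "bipE C \<longleftrightarrow> directed_bipartite C (induced_edges E C) \<and> induced_edges E C \<noteq> {}"
definition "GA \<longleftrightarrow> (\<forall>x\<in>V. \<forall>y\<in>V. \<forall>z\<in>V. (x,y) \<in> E \<longrightarrow> ((y,z) \<in> E \<longleftrightarrow> (x,z) \<in> E))"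

lemma GA_iff: "associative_on (ga_carrier V) (ga_op E) \<longleftrightarrow> GA"
  unfolding GA_def assoc_char ..

lemma finite_ops: "finite (opn n ` bracketings n)"
  using finite_brack by blast

lemma two_le_sp:
  assumes "t1 \<in> bracketings n" "t2 \<in> bracketings n" "opn n t1 \<noteq> opn n t2"
  shows "2 \<le> sp n"
proof -
  have "{opn n t1, opn n t2} \<subseteq> opn n ` bracketings n" using assms by auto
  from card_mono[OF finite_ops this] show ?thesis using assms(3)
    by (simp add: assoc_spectrum_def)
qed

lemma lcomb_br: "1 \<le> n \<Longrightarrow> lcomb (n - 1) \<in> bracketings n"
  by (simp add: bracketings_def)

lemma nlc_br: "2 \<le> n \<Longrightarrow> Node Leaf (lcomb (n - 2)) \<in> bracketings n"
  by (simp add: bracketings_def)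

lemma sp_one:
  assumes GA "1 \<le> n"
  shows "sp n = 1"
proof -
  have D: "\<forall>x\<in>V. \<forall>y z. (x,y) \<in> E \<longrightarrow> y \<in> V \<and> ((y,z) \<in> E \<longleftrightarrow> (x,z) \<in> E)"
    using assms(1) EV unfolding GA_def by blast
  have "opn n ` bracketings n = {opn n (lcomb (n - 1))}"
  proof
    show "opn n ` bracketings n \<subseteq> {opn n (lcomb (n - 1))}"
    proof
      fix f assume "f \<in> opn n ` bracketings n"
      then obtain t where t: "t \<in> bracketings n" "f = opn n t" by blast
      have lt: "leaves t = n" using t by (simp add: bracketings_def)
      have "opn n t = opn n (lcomb (n - 1))"
        unfolding opeq[OF lt leaves_lcomb[of "n - 1", unfolded Suc_diff_1[OF order.strict_trans2[OF zero_less_one assms(2)]]]]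
      proof (intro allI impI)
        fix xs :: "'v list" assume xs: "length xs = n \<and> set xs \<subseteq> V"
        then have "hd xs \<in> V" using assms(2) by (cases xs) auto
        then show "gh E t xs \<longleftrightarrow> gh E (lcomb (n - 1)) xs"
          using hom_assoc[OF D, of xs t] gh_lcomb[of xs "n - 1" E] xs lt assms(2) by auto
      qed
      then show "f \<in> {opn n (lcomb (n - 1))}" using t by simp
    qed
  next
    show "{opn n (lcomb (n - 1))} \<subseteq> opn n ` bracketings n" using lcomb_br[OF assms(2)] by blast
  qed
  then show ?thesis by (simp add: assoc_spectrum_def)
qed

lemma sp3_two:
  assumes "\<not> GA"
  shows "2 \<le> sp 3"
proof -
  obtain x y z where xyz: "x \<in> V" "y \<in> V" "z \<in> V" "(x,y) \<in> E" "((y,z) \<in> E) \<noteq> ((x,z) \<in> E)"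
    using assms unfolding GA_def by blast
  let ?t1 = "lcomb 2" and ?t2 = "Node Leaf (lcomb 1)"
  have "opn 3 ?t1 \<noteq> opn 3 ?t2"
  proof
    assume "opn 3 ?t1 = opn 3 ?t2"
    then have H: "\<forall>xs. length xs = 3 \<and> set xs \<subseteq> V \<longrightarrow> (gh E ?t1 xs \<longleftrightarrow> gh E ?t2 xs)"
      using opeq[of ?t1 3 ?t2 V E] by (simp add: numeral_eq_Suc)
    have "gh E ?t1 [x,y,z] \<longleftrightarrow> gh E ?t2 [x,y,z]"
      using H[rule_format, of "[x,y,z]"] xyz by simp
    then show False using xyz by (simp add: numeral_eq_Suc)
  qed
  then show ?thesis using two_le_sp lcomb_br[of 3] nlc_br[of 3] by (simp add: numeral_eq_Suc)
qed

lemma sym_rt: "(x,y) \<in> (E \<union> E\<inverse>)\<^sup>* \<Longrightarrow> (y,x) \<in> (E \<union> E\<inverse>)\<^sup>*"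
proof -
  assume "(x,y) \<in> (E \<union> E\<inverse>)\<^sup>*"
  then have "(y,x) \<in> ((E \<union> E\<inverse>)\<inverse>)\<^sup>*" by (simp add: rtrancl_converseI)
  moreover have "(E \<union> E\<inverse>)\<inverse> = E \<union> E\<inverse>" by auto
  ultimately show ?thesis by simp
qed

lemma comp_self: "x \<in> V \<Longrightarrow> x \<in> comp x"
  by (simp add: comp_def weak_component_def)

lemma comp_edge1: "x \<in> comp v \<Longrightarrow> (x,y) \<in> E \<Longrightarrow> y \<in> comp v"
  using EV unfolding comp_def weak_component_def
  by (auto intro: rtrancl_into_rtrancl)

lemma comp_edge2: "x \<in> comp v \<Longrightarrow> (y,x) \<in> E \<Longrightarrow> y \<in> comp v"
  using EV unfolding comp_def weak_component_def
  by (auto intro: rtrancl_into_rtrancl)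

lemma comp_same: "y \<in> comp x \<Longrightarrow> comp y = comp x"
  unfolding comp_def weak_component_def
  using sym_rt by (blast intro: rtrancl_trans)

lemma comp_conn: "a \<in> comp v \<Longrightarrow> b \<in> comp v \<Longrightarrow> (a,b) \<in> (E \<union> E\<inverse>)\<^sup>*"
  unfolding comp_def weak_component_def using sym_rt by (blast intro: rtrancl_trans)

lemma comps_eq: "weak_components V E = comp ` V"
  by (simp add: weak_components_def comp_def[abs_def])

lemma comp_sub: "comp v \<subseteq> V"
  by (auto simp: comp_def weak_component_def)

lemma assocC_D:
  assumes "assocC (comp v)"
  shows "\<forall>x\<in>comp v. \<forall>y z. (x,y) \<in> E \<longrightarrow> y \<in> comp v \<and> ((y,z) \<in> E \<longleftrightarrow> (x,z) \<in> E)"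
proof (intro ballI allI impI)
  fix x y z assume x: "x \<in> comp v" and xy: "(x,y) \<in> E"
  have y: "y \<in> comp v" using comp_edge1[OF x xy] .
  have A: "\<forall>a\<in>comp v. \<forall>b\<in>comp v. \<forall>c\<in>comp v. (a,b) \<in> induced_edges E (comp v) \<longrightarrow>
     ((b,c) \<in> induced_edges E (comp v) \<longleftrightarrow> (a,c) \<in> induced_edges E (comp v))"
    using assms unfolding assocC_def assoc_char .
  show "y \<in> comp v \<and> ((y,z) \<in> E \<longleftrightarrow> (x,z) \<in> E)"
  proof (cases "z \<in> comp v")
    case True
    then show ?thesis using A x y xy unfolding induced_edges_def by blast
  next
    case False
    then show ?thesis using y comp_edge1[OF x, of z] comp_edge1[OF y, of z] by blast
  qed
qed

lemma bip_no2:
  assumes "directed_bipartite C (induced_edges E C)" "a \<in> C" "b \<in> C" "c \<in> C"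
    "(a,b) \<in> E" "(b,c) \<in> E"
  shows False
  using assms unfolding directed_bipartite_def induced_edges_def by blast

lemma notbip_2:
  assumes "\<not> directed_bipartite C (induced_edges E C)"
  shows "\<exists>a b c. a \<in> C \<and> b \<in> C \<and> c \<in> C \<and> (a,b) \<in> E \<and> (b,c) \<in> E"
proof (rule ccontr)
  assume H: "\<not> ?thesis"
  let ?V1 = "{a\<in>C. \<exists>b\<in>C. (a,b) \<in> E}"
  have "?V1 \<union> (C - ?V1) = C \<and> ?V1 \<inter> (C - ?V1) = {} \<and> induced_edges E C \<subseteq> ?V1 \<times> (C - ?V1)"
    using H unfolding induced_edges_def by blast
  then show False using assms unfolding directed_bipartite_def by blast
qed

lemma bipE_nassoc: "bipE C \<Longrightarrow> \<not> assocC C"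
proof
  assume b: "bipE C" and a: "assocC C"
  obtain x y where xy: "(x,y) \<in> induced_edges E C" using b unfolding bipE_def by auto
  then have xyC: "x \<in> C" "y \<in> C" "(x,y) \<in> E" by (auto simp: induced_edges_def)
  have "(y,y) \<in> induced_edges E C" using a xy xyC unfolding assocC_def assoc_char by blast
  then show False using b xyC bip_no2[of C x y y] unfolding bipE_def induced_edges_def by blast
qed

lemma allC_GA: "(\<forall>v\<in>V. assocC (comp v)) \<Longrightarrow> GA"
  unfolding GA_def
proof (intro ballI impI)
  fix x y z assume H: "\<forall>v\<in>V. assocC (comp v)" and x: "x \<in> V" "y \<in> V" "z \<in> V" "(x,y) \<in> E"
  have "assocC (comp x)" using H x by blast
  from assocC_D[OF this] comp_self[OF x(1)] x(4)
  show "((y,z) \<in> E \<longleftrightarrow> (x,z) \<in> E)" by blast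
qed

end

context dg begin

definition "cond \<longleftrightarrow> (\<forall>C\<in>comp ` V. assocC C \<or> bipE C) \<and> (\<exists>C\<in>comp ` V. bipE C)"

lemma NL:
  assumes c: cond and t: "\<not> is_lc t" and len: "length xs = leaves t" and xs: "set xs \<subseteq> V"
  shows "gh E t xs \<longleftrightarrow> star E xs \<and> assocC (comp (hd xs))"
proof -
  have hV: "hd xs \<in> V" using xs len leaves_pos[of t] by (cases xs) auto
  show ?thesis
  proof
    assume g: "gh E t xs"
    obtain a b where ab: "(hd xs, a) \<in> E" "(a,b) \<in> E" using twopath[OF t len g] by blast
    have h: "hd xs \<in> comp (hd xs)" using comp_self[OF hV] .
    have a: "a \<in> comp (hd xs)" using comp_edge1[OF h ab(1)] .
    have b: "b \<in> comp (hd xs)" using comp_edge1[OF a ab(2)] .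
    have "\<not> bipE (comp (hd xs))"
      using bip_no2[OF _ h a b ab] unfolding bipE_def by blast
    then have ac: "assocC (comp (hd xs))" using c hV unfolding cond_def by blast
    have "star E xs" using hom_assoc[OF assocC_D[OF ac] h len] g by simp
    then show "star E xs \<and> assocC (comp (hd xs))" using ac by simp
  next
    assume "star E xs \<and> assocC (comp (hd xs))"
    then show "gh E t xs" using hom_assoc[OF assocC_D, of "hd xs" xs t] comp_self[OF hV] len by blast
  qed
qed

lemma sp_two:
  assumes c: cond and n: "3 \<le> n"
  shows "sp n = 2"
proof -
  let ?t1 = "lcomb (n - 1)" and ?t2 = "Node Leaf (lcomb (n - 2))"
  have l1: "leaves ?t1 = n" and l2: "leaves ?t2 = n" using n by auto
  have nl2: "\<not> is_lc ?t2" using n by (cases "n - 2") auto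
  have img: "opn n ` bracketings n = {opn n ?t1, opn n ?t2}"
  proof
    show "{opn n ?t1, opn n ?t2} \<subseteq> opn n ` bracketings n"
      using lcomb_br[of n] nlc_br[of n] n by auto
  next
    show "opn n ` bracketings n \<subseteq> {opn n ?t1, opn n ?t2}"
    proof
      fix f assume "f \<in> opn n ` bracketings n"
      then obtain t where t: "leaves t = n" "f = opn n t" by (auto simp: bracketings_def)
      show "f \<in> {opn n ?t1, opn n ?t2}"
      proof (cases "is_lc t")
        case True
        then have "t = ?t1" using is_lc_eq[OF True] t by simp
        then show ?thesis using t by simp
      next
        case False
        have "opn n t = opn n ?t2"
          unfolding opeq[OF t(1) l2]
          using NL[OF c False] NL[OF c nl2] t(1) l2 by simp
        then show ?thesis using t by simp
      qed
    qed
  qed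
  obtain v where v: "v \<in> V" "bipE (comp v)" using c unfolding cond_def by blast
  then obtain a b where ab: "(a,b) \<in> E" "a \<in> comp v" "b \<in> comp v"
    unfolding bipE_def induced_edges_def by auto
  have aV: "a \<in> V" "b \<in> V" using ab EV by auto
  have ca: "comp a = comp v" using comp_same[OF ab(2)] .
  let ?xs = "a # replicate (n - 1) b"
  have lx: "length ?xs = n" using n by simp
  have sx: "set ?xs \<subseteq> V" using aV by auto
  have "gh E ?t1 ?xs" using gh_lcomb[of ?xs "n - 1" E] lx ab(1) n by (simp add: star_def)
  moreover have "\<not> gh E ?t2 ?xs"
  proof -
    have e: "gh E ?t2 ?xs \<longleftrightarrow> star E ?xs \<and> assocC (comp (hd ?xs))"
      using NL[OF c nl2, of ?xs] lx l2 sx by argo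
    show ?thesis using e ca bipE_nassoc[OF v(2)] by simp
  qed
  ultimately have "opn n ?t1 \<noteq> opn n ?t2" using opeq[OF l1 l2, of V E] lx sx by blast
  then show ?thesis unfolding assoc_spectrum_def img by simp
qed

end

fun gd :: "nat \<Rightarrow> bool list \<Rightarrow> bool" where
  "gd s [] = (s \<noteq> 1)"
| "gd s (True # w) = (s \<noteq> 1 \<and> gd 0 w)"
| "gd s (False # w) = gd (if s = 0 then 1 else 2) w"

definition "st01 w \<longleftrightarrow> (\<exists>u. w = [False, True] @ u)"
definition "en10 w \<longleftrightarrow> (\<exists>u. w = u @ [True, False])"
definition "h101 w \<longleftrightarrow> (\<exists>u v. w = u @ [True, False, True] @ v)"

lemma st01_simps[simp]: "\<not> st01 []" "st01 (x # w) \<longleftrightarrow> \<not> x \<and> w \<noteq> [] \<and> hd w"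
  unfolding st01_def by (cases w; auto)+

lemma en10_simps[simp]: "\<not> en10 []" "en10 (x # w) \<longleftrightarrow> (x \<and> w = [False]) \<or> en10 w"
proof -
  show "\<not> en10 []" unfolding en10_def by simp
  show "en10 (x # w) \<longleftrightarrow> (x \<and> w = [False]) \<or> en10 w"
  proof
    assume "en10 (x # w)"
    then obtain u where u: "x # w = u @ [True, False]" unfolding en10_def by blast
    then show "(x \<and> w = [False]) \<or> en10 w"
      unfolding en10_def by (cases u) auto
  next
    assume "(x \<and> w = [False]) \<or> en10 w"
    then show "en10 (x # w)" unfolding en10_def
      by (auto intro: exI[of _ "[]"])
  qed
qed

lemma h101_simps[simp]: "\<not> h101 []" "h101 (x # w) \<longleftrightarrow> (x \<and> st01 w) \<or> h101 w"
proof -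
  show "\<not> h101 []" unfolding h101_def by simp
  show "h101 (x # w) \<longleftrightarrow> (x \<and> st01 w) \<or> h101 w"
  proof
    assume "h101 (x # w)"
    then obtain u v where u: "x # w = u @ [True, False, True] @ v" unfolding h101_def by blast
    then show "(x \<and> st01 w) \<or> h101 w"
      unfolding h101_def st01_def by (cases u) auto
  next
    assume "(x \<and> st01 w) \<or> h101 w"
    then show "h101 (x # w)" unfolding h101_def st01_def
      by (auto intro: exI[of _ "[]"]) (metis Cons_eq_appendI)
  qed
qed

lemma gd_char:
  "(gd 0 w \<longleftrightarrow> \<not> en10 w \<and> \<not> h101 w \<and> \<not> st01 w \<and> w \<noteq> [False])
   \<and> (gd 1 w \<longleftrightarrow> (\<exists>w'. w = False # w' \<and> \<not> en10 w' \<and> \<not> h101 w'))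
   \<and> (gd 2 w \<longleftrightarrow> \<not> en10 w \<and> \<not> h101 w)"
proof (induction w)
  case Nil
  then show ?case by simp
next
  case (Cons x w)
  show ?case
  proof (cases x)
    case True
    then show ?thesis using Cons by auto
  next
    case False
    show ?thesis
    proof (cases w)
      case Nil
      then show ?thesis using False by simp
    next
      case (Cons y w2)
      have i0: "gd 1 w \<longleftrightarrow> (\<exists>w'. w = False # w' \<and> \<not> en10 w' \<and> \<not> h101 w')"
        using Cons.IH by blast
      have i2: "gd 2 w \<longleftrightarrow> \<not> en10 w \<and> \<not> h101 w"
        using Cons.IH by blast
      have a: "gd 0 (x # w) \<longleftrightarrow> gd 1 w" using False by simp
      have b: "gd 1 (x # w) \<longleftrightarrow> gd 2 w" using False by simp
      have c: "gd 2 (x # w) \<longleftrightarrow> gd 2 w" using False by simp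
      show ?thesis unfolding a b c i0 i2 using False Cons by auto
    qed
  qed
qed

lemma R_gd: "m \<noteq> 1 \<Longrightarrow> R_words m = {w. length w = m \<and> gd 0 w}"
proof (rule set_eqI)
  fix w :: "bool list"
  assume m: "m \<noteq> 1"
  have r: "w \<in> R_words m \<longleftrightarrow> length w = m \<and> \<not> st01 w \<and> \<not> en10 w \<and> \<not> h101 w"
    unfolding R_words_def st01_def en10_def h101_def by simp
  have g: "gd 0 w \<longleftrightarrow> \<not> en10 w \<and> \<not> h101 w \<and> \<not> st01 w \<and> w \<noteq> [False]"
    using gd_char[of w] by blast
  show "w \<in> R_words m \<longleftrightarrow> w \<in> {w. length w = m \<and> gd 0 w}"
    using r g m by auto
qed

fun ra :: "nat \<Rightarrow> nat" and rb :: "nat \<Rightarrow> nat" and rc :: "nat \<Rightarrow> nat" where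
  "ra 0 = 1"
| "ra (Suc m) = ra m + rb m"
| "rb 0 = 0"
| "rb (Suc m) = rc m"
| "rc 0 = 1"
| "rc (Suc m) = ra m + rc m"

lemma ra_rec: "ra (Suc (Suc (Suc (Suc m)))) = ra (Suc (Suc (Suc m))) + ra (Suc (Suc m)) + ra m"
  by simp

lemma ra_pos: "ra m > 0"
  by (induction m) auto

definition cnt :: "nat \<Rightarrow> nat \<Rightarrow> nat" where
  "cnt s m = card {w. length w = m \<and> gd s w}"

lemma fin_len: "finite {w :: bool list. length w = m \<and> P w}"
proof -
  have "finite {w :: bool list. set w \<subseteq> UNIV \<and> length w = m}"
    by (rule finite_lists_length_eq) simp
  then show ?thesis by (rule finite_subset[rotated]) auto
qed

lemma cnt_Suc:
  "cnt s (Suc m) = (if s \<noteq> 1 then cnt 0 m else 0) + cnt (if s = 0 then 1 else 2) m"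
proof -
  let ?T = "(Cons True) ` {w. length w = m \<and> gd 0 w}"
  let ?F = "(Cons False) ` {w. length w = m \<and> gd (if s = 0 then 1 else 2) w}"
  have eq: "{w. length w = Suc m \<and> gd s w} = (if s \<noteq> 1 then ?T else {}) \<union> ?F"
  proof (rule set_eqI)
    fix w :: "bool list"
    show "w \<in> {w. length w = Suc m \<and> gd s w} \<longleftrightarrow> w \<in> (if s \<noteq> 1 then ?T else {}) \<union> ?F"
    proof (cases w)
      case Nil then show ?thesis by auto
    next
      case (Cons x w')
      then show ?thesis by (cases x) auto
    qed
  qed
  have d: "(if s \<noteq> 1 then ?T else {}) \<inter> ?F = {}" by auto
  have c1: "card ?T = cnt 0 m" unfolding cnt_def by (rule card_image) (simp add: inj_on_def)
  have c2: "card ?F = cnt (if s = 0 then 1 else 2) m" unfolding cnt_def by (rule card_image) (simp add: inj_on_def)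
  have "cnt s (Suc m) = card ((if s \<noteq> 1 then ?T else {}) \<union> ?F)" unfolding cnt_def eq ..
  also have "\<dots> = card (if s \<noteq> 1 then ?T else {}) + card ?F"
    by (rule card_Un_disjoint) (use fin_len d in auto)
  finally show ?thesis using c1 c2 by simp
qed

lemma cnt_ra: "cnt 0 m = ra m \<and> cnt 1 m = rb m \<and> cnt 2 m = rc m"
proof (induction m)
  case 0
  have "{w :: bool list. length w = 0 \<and> gd 0 w} = {[]}" by auto
  moreover have "{w :: bool list. length w = 0 \<and> gd 1 w} = {}" by auto
  moreover have "{w :: bool list. length w = 0 \<and> gd 2 w} = {[]}" by auto
  ultimately show ?case by (simp add: cnt_def)
next
  case (Suc m)
  then show ?case by (simp add: cnt_Suc)
qed

lemma card_R: "2 \<le> m \<Longrightarrow> card (R_words m) = ra m"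
  using R_gd[of m] cnt_ra[of m] by (simp add: cnt_def)

datatype blk = BL | BS nat

fun bsize :: "blk \<Rightarrow> nat" where
  "bsize BL = 1" | "bsize (BS k) = Suc k"

fun bw :: "blk \<Rightarrow> bool list" where
  "bw BL = [True]" | "bw (BS k) = replicate (Suc k) False"

definition enc :: "blk list \<Rightarrow> bool list" where
  "enc bs = concat (map bw bs)"

fun vb :: "blk list \<Rightarrow> bool" where
  "vb [] = True"
| "vb (BL # bs) = vb bs"
| "vb (BS k # bs) = (0 < k \<and> (bs = [] \<or> hd bs = BL) \<and> vb bs)"

definition tot :: "blk list \<Rightarrow> nat" where
  "tot bs = sum_list (map bsize bs)"

lemma length_bw[simp]: "length (bw b) = bsize b"
  by (cases b) auto

lemma length_enc: "length (enc bs) = tot bs"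
  unfolding enc_def tot_def by (induction bs) auto

lemma parse_ex:
  "(gd 0 w \<longrightarrow> (\<exists>bs. vb bs \<and> enc bs = w))
   \<and> (gd 2 w \<longrightarrow> (\<exists>k bs. vb bs \<and> (bs = [] \<or> hd bs = BL) \<and> w = replicate k False @ enc bs))"
proof (induction w)
  case Nil
  show ?case by (auto simp: enc_def intro!: exI[of _ "[]"])
next
  case (Cons x w)
  show ?case
  proof (cases x)
    case True
    have "gd 0 (x # w) \<longrightarrow> (\<exists>bs. vb bs \<and> enc bs = x # w)"
    proof
      assume "gd 0 (x # w)"
      then have "gd 0 w" using True by simp
      then obtain bs where "vb bs" "enc bs = w" using Cons by blast
      then show "\<exists>bs. vb bs \<and> enc bs = x # w" using True
        by (intro exI[of _ "BL # bs"]) (simp add: enc_def)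
    qed
    moreover have "gd 2 (x # w) \<longrightarrow> (\<exists>k bs. vb bs \<and> (bs = [] \<or> hd bs = BL) \<and> x # w = replicate k False @ enc bs)"
    proof
      assume "gd 2 (x # w)"
      then have "gd 0 w" using True by simp
      then obtain bs where "vb bs" "enc bs = w" using Cons by blast
      then show "\<exists>k bs. vb bs \<and> (bs = [] \<or> hd bs = BL) \<and> x # w = replicate k False @ enc bs" using True
        by (intro exI[of _ 0] exI[of _ "BL # bs"]) (simp add: enc_def)
    qed
    ultimately show ?thesis by blast
  next
    case False
    have "gd 0 (x # w) \<longrightarrow> (\<exists>bs. vb bs \<and> enc bs = x # w)"
    proof
      assume "gd 0 (x # w)"
      then have g1: "gd 1 w" using False by simp
      then obtain w' where w': "w = False # w'" using gd_char[of w] by blast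
      then have "gd 2 w" using g1 by simp
      then obtain k bs where kb: "vb bs" "bs = [] \<or> hd bs = BL" "w = replicate k False @ enc bs"
        using Cons by blast
      have k: "0 < k"
      proof (rule ccontr)
        assume "\<not> 0 < k"
        then have "w = enc bs" using kb by simp
        then show False using kb(2) w' by (cases bs) (auto simp: enc_def)
      qed
      show "\<exists>bs. vb bs \<and> enc bs = x # w"
        using kb k False
        by (intro exI[of _ "BS k # bs"]) (auto simp: enc_def)
    qed
    moreover have "gd 2 (x # w) \<longrightarrow> (\<exists>k bs. vb bs \<and> (bs = [] \<or> hd bs = BL) \<and> x # w = replicate k False @ enc bs)"
    proof
      assume "gd 2 (x # w)"
      then have "gd 2 w" using False by simp
      then obtain k bs where kb: "vb bs" "bs = [] \<or> hd bs = BL" "w = replicate k False @ enc bs"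
        using Cons by blast
      then show "\<exists>k bs. vb bs \<and> (bs = [] \<or> hd bs = BL) \<and> x # w = replicate k False @ enc bs"
        using False by (intro exI[of _ "Suc k"] exI[of _ bs]) simp
    qed
    ultimately show ?thesis by blast
  qed
qed

fun rcomb :: "nat \<Rightarrow> btree" where
  "rcomb 0 = Leaf"
| "rcomb (Suc k) = Node Leaf (rcomb k)"

lemma leaves_rcomb[simp]: "leaves (rcomb k) = Suc k"
  by (induction k) auto

fun fS :: "blk \<Rightarrow> btree" where
  "fS BL = Leaf" | "fS (BS k) = lcomb k"

fun fC :: "blk \<Rightarrow> btree" where
  "fC BL = Leaf" | "fC (BS k) = rcomb k"

lemma leaves_fS[simp]: "leaves (fS b) = bsize b" by (cases b) auto
lemma leaves_fC[simp]: "leaves (fC b) = bsize b" by (cases b) auto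

definition bt :: "(blk \<Rightarrow> btree) \<Rightarrow> blk list \<Rightarrow> btree" where
  "bt f bs = foldl (\<lambda>acc b. Node acc (f b)) Leaf bs"

lemma bt_snoc: "bt f (bs @ [b]) = Node (bt f bs) (f b)"
  by (simp add: bt_def)

lemma tot_simps[simp]: "tot [] = 0" "tot (b # bs) = bsize b + tot bs" "tot (bs @ cs) = tot bs + tot cs"
  by (auto simp: tot_def)

lemma bsize_pos[simp]: "0 < bsize b" "bsize b \<noteq> 0"
  by (cases b; simp)+

lemma leaves_bt: "(\<And>b. leaves (f b) = bsize b) \<Longrightarrow> leaves (bt f bs) = Suc (tot bs)"
  by (induction bs rule: rev_induct) (auto simp: bt_snoc, simp add: bt_def)

fun bok :: "('v \<times> 'v) set \<Rightarrow> (blk \<Rightarrow> btree) \<Rightarrow> blk list \<Rightarrow> 'v \<Rightarrow> 'v list \<Rightarrow> bool" where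
  "bok E f [] x ys = True"
| "bok E f (b # bs) x ys = ((x, hd ys) \<in> E \<and> gh E (f b) (take (bsize b) ys) \<and> bok E f bs x (drop (bsize b) ys))"

lemma bok_append:
  "length ys = tot bs + tot cs \<Longrightarrow>
   bok E f (bs @ cs) x ys \<longleftrightarrow> bok E f bs x (take (tot bs) ys) \<and> bok E f cs x (drop (tot bs) ys)"
proof (induction bs arbitrary: ys)
  case Nil then show ?case by simp
next
  case (Cons b bs)
  have IH: "bok E f (bs @ cs) x (drop (bsize b) ys) \<longleftrightarrow>
     bok E f bs x (take (tot bs) (drop (bsize b) ys)) \<and> bok E f cs x (drop (tot bs) (drop (bsize b) ys))"
    using Cons by simp
  have "take (bsize b) (take (bsize b + tot bs) ys) = take (bsize b) ys" by (simp add: min_def)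
  moreover have "drop (bsize b) (take (bsize b + tot bs) ys) = take (tot bs) (drop (bsize b) ys)"
    by (simp add: drop_take)
  moreover have "hd (take (bsize b + tot bs) ys) = hd ys" by simp
  ultimately show ?case using IH by (simp add: add.commute)
qed

lemma gh_bt:
  assumes lf: "\<And>b. leaves (f b) = bsize b"
  shows "length ys = tot bs \<Longrightarrow> gh E (bt f bs) (x # ys) \<longleftrightarrow> bok E f bs x ys"
proof (induction bs arbitrary: ys rule: rev_induct)
  case Nil
  then show ?case by (simp add: bt_def)
next
  case (snoc b bs)
  have lb: "leaves (bt f bs) = Suc (tot bs)" using leaves_bt[of f bs] lf by simp
  have IH: "gh E (bt f bs) (x # take (tot bs) ys) \<longleftrightarrow> bok E f bs x (take (tot bs) ys)"
    using snoc by simp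
  have dl: "length (drop (tot bs) ys) = bsize b" using snoc.prems by simp
  have "bok E f (bs @ [b]) x ys \<longleftrightarrow> bok E f bs x (take (tot bs) ys) \<and> bok E f [b] x (drop (tot bs) ys)"
    using bok_append[of ys bs "[b]"] snoc.prems by simp
  moreover have "bok E f [b] x (drop (tot bs) ys) \<longleftrightarrow> (x, hd (drop (tot bs) ys)) \<in> E \<and> gh E (f b) (drop (tot bs) ys)"
    using dl by simp
  moreover have tk: "take (bsize b) (drop (tot bs) ys) = drop (tot bs) ys" using dl by simp
  ultimately have "bok E f (bs @ [b]) x ys \<longleftrightarrow> bok E f bs x (take (tot bs) ys) \<and>
      (x, hd (drop (tot bs) ys)) \<in> E \<and> gh E (f b) (drop (tot bs) ys)" by simp
  moreover have "gh E (bt f (bs @ [b])) (x # ys) \<longleftrightarrow> gh E (bt f bs) (x # take (tot bs) ys) \<and>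
      gh E (f b) (drop (tot bs) ys) \<and> (x, hd (drop (tot bs) ys)) \<in> E"
    using lb by (simp add: bt_snoc)
  ultimately show ?case using IH by blast
qed

lemma bok_Cons_app:
  "length seg = bsize b \<Longrightarrow>
   bok E f (b # bs) x (seg @ rest) \<longleftrightarrow> (x, hd seg) \<in> E \<and> gh E (f b) seg \<and> bok E f bs x rest"
proof -
  assume l: "length seg = bsize b"
  then have "seg \<noteq> []" using bsize_pos[of b] by auto
  then show ?thesis using l by simp
qed

lemma bok_hd: "bs \<noteq> [] \<Longrightarrow> bok E f bs x ys \<Longrightarrow> (x, hd ys) \<in> E"
  by (cases bs) auto

lemma bok_fill:
  assumes "\<And>b. length (sg b) = bsize b \<and> (x, hd (sg b)) \<in> E \<and> gh E (f b) (sg b)"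
  shows "bok E f cs x (concat (map sg cs))"
proof (induction cs)
  case Nil then show ?case by simp
next
  case (Cons a cs)
  have "length (sg a) = bsize a" using assms by blast
  from bok_Cons_app[OF this, of E f cs x "concat (map sg cs)"] show ?case
    using assms[of a] Cons.IH by simp
qed

lemma length_fill: "(\<And>b. length (sg b) = bsize b) \<Longrightarrow> length (concat (map sg cs)) = tot cs"
  by (induction cs) auto

lemma set_fill: "(\<And>b. set (sg b) \<subseteq> V) \<Longrightarrow> set (concat (map sg cs)) \<subseteq> V"
  by (induction cs) auto

lemma vb_tl: "vb (b # cs) \<Longrightarrow> vb cs"
  by (cases b) auto

lemma tot_zero: "tot bs = 0 \<longleftrightarrow> bs = []"
  by (cases bs) auto

lemma dist_gen:
  assumes fill: "\<And>b. \<exists>seg. length seg = bsize b \<and> set seg \<subseteq> V \<and> (x, hd seg) \<in> E \<and> gh E (f b) seg"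
  and base: "\<And>b cs b' cs'. vb (b#cs) \<Longrightarrow> vb (b'#cs') \<Longrightarrow> tot (b#cs) = tot (b'#cs') \<Longrightarrow> b \<noteq> b' \<Longrightarrow>
      (\<exists>ys. length ys = tot (b#cs) \<and> set ys \<subseteq> V \<and> bok E f (b#cs) x ys \<noteq> bok E f (b'#cs') x ys)"
  shows "vb bs \<Longrightarrow> vb bs' \<Longrightarrow> tot bs = tot bs' \<Longrightarrow> bs \<noteq> bs' \<Longrightarrow>
      \<exists>ys. length ys = tot bs \<and> set ys \<subseteq> V \<and> bok E f bs x ys \<noteq> bok E f bs' x ys"
proof (induction bs arbitrary: bs')
  case Nil
  then show ?case using tot_zero[of bs'] by simp
next
  case (Cons b cs)
  obtain b' cs' where bs': "bs' = b' # cs'"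
    using Cons.prems tot_zero[of bs'] by (cases bs') auto
  show ?case
  proof (cases "b = b'")
    case False
    then show ?thesis using base Cons.prems bs' by blast
  next
    case True
    then have "cs \<noteq> cs'" "tot cs = tot cs'" "vb cs" "vb cs'"
      using Cons.prems bs' vb_tl by auto
    then obtain ys0 where ys0: "length ys0 = tot cs" "set ys0 \<subseteq> V" "bok E f cs x ys0 \<noteq> bok E f cs' x ys0"
      using Cons.IH by blast
    obtain seg where seg: "length seg = bsize b" "set seg \<subseteq> V" "(x, hd seg) \<in> E" "gh E (f b) seg"
      using fill by blast
    show ?thesis
      using seg ys0 bok_Cons_app[OF seg(1), of E f cs x ys0] bok_Cons_app[OF seg(1), of E f cs' x ys0]
        True bs'
      by (intro exI[of _ "seg @ ys0"]) auto
  qed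
qed

definition sgS :: "'v \<Rightarrow> 'v \<Rightarrow> blk \<Rightarrow> 'v list" where
  "sgS h l b = (case b of BL \<Rightarrow> [h] | BS k \<Rightarrow> h # replicate k l)"

lemma sgS_ok:
  assumes "(x,h) \<in> E" "(h,l) \<in> E"
  shows "length (sgS h l b) = bsize b \<and> (x, hd (sgS h l b)) \<in> E \<and> gh E (fS b) (sgS h l b)"
proof (cases b)
  case BL then show ?thesis using assms by (simp add: sgS_def)
next
  case (BS k)
  have "gh E (lcomb k) (h # replicate k l)"
    using gh_lcomb[of "h # replicate k l" k E] assms by (simp add: star_def)
  then show ?thesis using assms BS by (simp add: sgS_def)
qed

lemma sgS_set: "h \<in> V \<Longrightarrow> l \<in> V \<Longrightarrow> set (sgS h l b) \<subseteq> V"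
  by (cases b) (auto simp: sgS_def)

lemma sgS_hd: "hd (sgS h l b) = h"
  by (cases b) (auto simp: sgS_def)

lemma fillS:
  assumes "(x,h) \<in> E" "(h,l) \<in> E" "h \<in> V" "l \<in> V"
  shows "bok E fS cs x (concat (map (sgS h l) cs)) \<and> length (concat (map (sgS h l) cs)) = tot cs
    \<and> set (concat (map (sgS h l) cs)) \<subseteq> V"
  using bok_fill[of "sgS h l" x E fS cs] length_fill[of "sgS h l" cs] set_fill[of "sgS h l" V cs]
    sgS_ok[OF assms(1,2)] sgS_set[OF assms(3,4)] by blast

lemma O1_SB:
  assumes E: "(x,u) \<in> E" "(u,v) \<in> E" "(x,v) \<notin> E" and V: "u \<in> V" "v \<in> V"
    and vb: "vb (BL # cs)" "vb (BS k # cs')" and tt: "tot (BL # cs) = tot (BS k # cs')"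
  shows "\<exists>ys. length ys = tot (BL # cs) \<and> set ys \<subseteq> V \<and> bok E fS (BL # cs) x ys \<noteq> bok E fS (BS k # cs') x ys"
proof -
  have k: "0 < k" using vb by simp
  define F where "F = concat (map (sgS u v) cs')"
  have F: "bok E fS cs' x F" "length F = tot cs'" "set F \<subseteq> V"
    using fillS[OF E(1,2) V] unfolding F_def by auto
  let ?ys = "(u # replicate k v) @ F"
  have acc: "bok E fS (BS k # cs') x ?ys"
    using bok_Cons_app[of "u # replicate k v" "BS k" E fS cs' x F] gh_lcomb[of "u # replicate k v" k E] E F
    by (simp add: star_def)
  have csne: "cs \<noteq> []" using tt k by auto
  have "?ys = [u] @ (replicate k v @ F)" by simp
  then have "bok E fS (BL # cs) x ?ys \<longleftrightarrow> (x,u) \<in> E \<and> bok E fS cs x (replicate k v @ F)"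
    using bok_Cons_app[of "[u]" BL E fS cs x "replicate k v @ F"] by simp
  moreover have "\<not> bok E fS cs x (replicate k v @ F)"
    using bok_hd[OF csne, of E fS x "replicate k v @ F"] k E(3) by (cases k) auto
  ultimately have "\<not> bok E fS (BL # cs) x ?ys" by blast
  moreover have "length ?ys = tot (BL # cs)" using tt F by simp
  moreover have "set ?ys \<subseteq> V" using V F by auto
  ultimately show ?thesis using acc by blast
qed

lemma O2_SB:
  assumes E: "(x,u) \<in> E" "(u,v) \<in> E" "(x,v) \<notin> E" and V: "u \<in> V" "v \<in> V"
    and kk: "k < k'" and vb: "vb (BS k # cs)" "vb (BS k' # cs')" and tt: "tot (BS k # cs) = tot (BS k' # cs')"
  shows "\<exists>ys. length ys = tot (BS k # cs) \<and> set ys \<subseteq> V \<and> bok E fS (BS k # cs) x ys \<noteq> bok E fS (BS k' # cs') x ys"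
proof -
  define F where "F = concat (map (sgS u v) cs')"
  have F: "bok E fS cs' x F" "length F = tot cs'" "set F \<subseteq> V"
    using fillS[OF E(1,2) V] unfolding F_def by auto
  let ?ys = "(u # replicate k' v) @ F"
  have acc: "bok E fS (BS k' # cs') x ?ys"
    using bok_Cons_app[of "u # replicate k' v" "BS k'" E fS cs' x F] gh_lcomb[of "u # replicate k' v" k' E] E F
    by (simp add: star_def)
  have csne: "cs \<noteq> []" using tt kk by auto
  have "?ys = (u # replicate k v) @ (replicate (k' - k) v @ F)"
    using kk by (simp add: replicate_add[symmetric])
  then have "bok E fS (BS k # cs) x ?ys \<longrightarrow> bok E fS cs x (replicate (k' - k) v @ F)"
    using bok_Cons_app[of "u # replicate k v" "BS k" E fS cs x "replicate (k' - k) v @ F"] by simp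
  moreover have "\<not> bok E fS cs x (replicate (k' - k) v @ F)"
    using bok_hd[OF csne, of E fS x "replicate (k' - k) v @ F"] kk E(3) by (cases "k' - k") auto
  ultimately have "\<not> bok E fS (BS k # cs) x ?ys" by blast
  moreover have "length ?ys = tot (BS k # cs)" using tt F by simp
  moreover have "set ?ys \<subseteq> V" using V F by auto
  ultimately show ?thesis using acc by blast
qed

lemma O1_SW:
  assumes E: "(x,u) \<in> E" "(x,v) \<in> E" "(u,v) \<notin> E" "(v,l) \<in> E" and V: "u \<in> V" "v \<in> V" "l \<in> V"
    and vb: "vb (BL # cs)" "vb (BS k # cs')" and tt: "tot (BL # cs) = tot (BS k # cs')"
  shows "\<exists>ys. length ys = tot (BL # cs) \<and> set ys \<subseteq> V \<and> bok E fS (BL # cs) x ys \<noteq> bok E fS (BS k # cs') x ys"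
proof -
  have k: "0 < k" using vb by simp
  have csne: "cs \<noteq> []" using tt k by auto
  define F where "F = concat (map (sgS v l) cs)"
  have F: "bok E fS cs x F" "length F = tot cs" "set F \<subseteq> V"
    using fillS[OF E(2,4) V(2,3)] unfolding F_def by auto
  obtain c1 cs2 where cs: "cs = c1 # cs2" using csne by (cases cs) auto
  have ne: "sgS v l c1 \<noteq> []" using sgS_ok[OF E(2,4), of c1] by auto
  have "F \<noteq> [] \<and> hd F = v" unfolding F_def cs using ne sgS_hd[of v l c1] by simp
  then obtain R where R: "F = v # R" by (metis list.collapse)
  let ?ys = "[u] @ F"
  have acc: "bok E fS (BL # cs) x ?ys"
    using bok_Cons_app[of "[u]" BL E fS cs x F] E F by simp
  have lt: "length (take (Suc k) ?ys) = Suc k" using tt F by simp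
  have "take (Suc k) ?ys = u # v # take (k - 1) R" using R k by (cases k) auto
  then have "\<not> star E (take (Suc k) ?ys)" using E(3) by (simp add: star_def)
  then have "\<not> gh E (lcomb k) (take (Suc k) ?ys)" using gh_lcomb[OF lt] by simp
  then have "\<not> bok E fS (BS k # cs') x ?ys" by simp
  moreover have "length ?ys = tot (BL # cs)" using F by simp
  moreover have "set ?ys \<subseteq> V" using V F by auto
  ultimately show ?thesis using acc by blast
qed

lemma O2_SW:
  assumes E: "(x,w) \<in> E" "(x,z) \<in> E" "(w,z) \<notin> E" "(w,t) \<in> E" and V: "w \<in> V" "z \<in> V" "t \<in> V"
    and kk: "k < k'" and vb: "vb (BS k # cs)" "vb (BS k' # cs')" and tt: "tot (BS k # cs) = tot (BS k' # cs')"
  shows "\<exists>ys. length ys = tot (BS k # cs) \<and> set ys \<subseteq> V \<and> bok E fS (BS k # cs) x ys \<noteq> bok E fS (BS k' # cs') x ys"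
proof -
  have csne: "cs \<noteq> []" using tt kk by auto
  then obtain cs2 where cs: "cs = BL # cs2" using vb(1) by (cases cs) auto
  define F where "F = concat (map (sgS w t) cs2)"
  have F: "bok E fS cs2 x F" "length F = tot cs2" "set F \<subseteq> V"
    using fillS[OF E(1,4) V(1,3)] unfolding F_def by auto
  let ?ys = "(w # replicate k t) @ ([z] @ F)"
  have g1: "gh E (lcomb k) (w # replicate k t)"
    using gh_lcomb[of "w # replicate k t" k E] E by (simp add: star_def)
  have acc: "bok E fS (BS k # cs) x ?ys"
    unfolding cs
    using bok_Cons_app[of "w # replicate k t" "BS k" E fS "BL # cs2" x "[z] @ F"]
      bok_Cons_app[of "[z]" BL E fS cs2 x F] E F g1 by simp
  have lt: "length (take (Suc k') ?ys) = Suc k'" using tt F cs by simp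
  have "z \<in> set (take k' (replicate k t @ z # F))"
    using kk by (simp add: take_append) (cases "k' - k"; simp)
  then have "z \<in> set (tl (take (Suc k') ?ys))" by simp
  then have "\<not> star E (take (Suc k') ?ys)" using E(3) by (auto simp: star_def)
  then have "\<not> gh E (lcomb k') (take (Suc k') ?ys)" using gh_lcomb[OF lt] by simp
  then have "\<not> bok E fS (BS k' # cs') x ?ys" by simp
  moreover have "length ?ys = tot (BS k # cs)" using F cs by simp
  moreover have "set ?ys \<subseteq> V" using V F by auto
  ultimately show ?thesis using acc by blast
qed

lemma gh_rcomb_rep: "(x,x) \<in> E \<Longrightarrow> gh E (rcomb k) (replicate (Suc k) x)"
  by (induction k) auto

lemma gh_rcomb_end: "(x,x) \<in> E \<Longrightarrow> (x,u) \<in> E \<Longrightarrow> gh E (rcomb k) (replicate k x @ [u])"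
proof (induction k)
  case 0 then show ?case by simp
next
  case (Suc k)
  have "(x, hd (replicate k x @ [u])) \<in> E" using Suc.prems by (cases k) auto
  then show ?case using Suc by simp
qed

lemma gh_rcomb_bad:
  "(\<forall>t. (u,t) \<notin> E) \<Longrightarrow> length zs = Suc k \<Longrightarrow> j < k \<Longrightarrow> zs ! j = u \<Longrightarrow> \<not> gh E (rcomb k) zs"
proof (induction k arbitrary: zs j)
  case 0 then show ?case by simp
next
  case (Suc k)
  obtain z zs' where zs: "zs = z # zs'" using Suc.prems(2) by (cases zs) auto
  show ?case
  proof (cases "j = 0")
    case True
    then show ?thesis using Suc.prems zs by simp
  next
    case False
    then obtain j' where j': "j = Suc j'" by (cases j) auto
    then have "\<not> gh E (rcomb k) zs'" using Suc.IH[of zs' j'] Suc.prems zs by auto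
    then show ?thesis using zs by simp
  qed
qed

definition sgC :: "'v \<Rightarrow> blk \<Rightarrow> 'v list" where
  "sgC x b = replicate (bsize b) x"

lemma sgC_ok: "(x,x) \<in> E \<Longrightarrow> length (sgC x b) = bsize b \<and> (x, hd (sgC x b)) \<in> E \<and> gh E (fC b) (sgC x b)"
  by (cases b) (auto simp: sgC_def gh_rcomb_rep simp del: replicate_Suc)

lemma fillC:
  assumes "(x,x) \<in> E" "x \<in> V"
  shows "bok E fC cs x (concat (map (sgC x) cs)) \<and> length (concat (map (sgC x) cs)) = tot cs
    \<and> set (concat (map (sgC x) cs)) \<subseteq> V"
  using bok_fill[of "sgC x" x E fC cs] length_fill[of "sgC x" cs] set_fill[of "sgC x" V cs]
    sgC_ok[OF assms(1)] assms(2) by (auto simp: sgC_def)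

lemma O1_C:
  assumes E: "(x,x) \<in> E" "(x,u) \<in> E" "\<forall>t. (u,t) \<notin> E" and V: "x \<in> V" "u \<in> V"
    and vb: "vb (BL # cs)" "vb (BS k # cs')" and tt: "tot (BL # cs) = tot (BS k # cs')"
  shows "\<exists>ys. length ys = tot (BL # cs) \<and> set ys \<subseteq> V \<and> bok E fC (BL # cs) x ys \<noteq> bok E fC (BS k # cs') x ys"
proof -
  have k: "0 < k" using vb by simp
  define F where "F = concat (map (sgC x) cs)"
  have F: "bok E fC cs x F" "length F = tot cs" "set F \<subseteq> V"
    using fillC[OF E(1) V(1)] unfolding F_def by auto
  let ?ys = "[u] @ F"
  have acc: "bok E fC (BL # cs) x ?ys"
    using bok_Cons_app[of "[u]" BL E fC cs x F] E F by simp
  have lt: "length (take (Suc k) ?ys) = Suc k" using tt F by simp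
  have "\<not> gh E (rcomb k) (take (Suc k) ?ys)"
    by (rule gh_rcomb_bad[OF E(3) lt k]) simp
  then have "\<not> bok E fC (BS k # cs') x ?ys" by simp
  moreover have "length ?ys = tot (BL # cs)" using F by simp
  moreover have "set ?ys \<subseteq> V" using V F by auto
  ultimately show ?thesis using acc by blast
qed

lemma O2_C:
  assumes E: "(x,x) \<in> E" "(x,u) \<in> E" "\<forall>t. (u,t) \<notin> E" and V: "x \<in> V" "u \<in> V"
    and kk: "k < k'" and vb: "vb (BS k # cs)" "vb (BS k' # cs')" and tt: "tot (BS k # cs) = tot (BS k' # cs')"
  shows "\<exists>ys. length ys = tot (BS k # cs) \<and> set ys \<subseteq> V \<and> bok E fC (BS k # cs) x ys \<noteq> bok E fC (BS k' # cs') x ys"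
proof -
  have k: "0 < k" using vb by simp
  define F where "F = concat (map (sgC x) cs)"
  have F: "bok E fC cs x F" "length F = tot cs" "set F \<subseteq> V"
    using fillC[OF E(1) V(1)] unfolding F_def by auto
  let ?seg = "replicate k x @ [u]"
  let ?ys = "?seg @ F"
  have hs: "hd ?seg = x" using k by (cases k) auto
  have acc: "bok E fC (BS k # cs) x ?ys"
    using bok_Cons_app[of ?seg "BS k" E fC cs x F] E F hs gh_rcomb_end[OF E(1,2), of k] by simp
  have lt: "length (take (Suc k') ?ys) = Suc k'" using tt F by simp
  have "take (Suc k') ?ys ! k = u" using kk by (simp add: nth_append)
  then have "\<not> gh E (rcomb k') (take (Suc k') ?ys)"
    using gh_rcomb_bad[OF E(3) lt kk] by simp
  then have "\<not> bok E fC (BS k' # cs') x ?ys" by simp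
  moreover have "length ?ys = tot (BS k # cs)" using F by simp
  moreover have "set ?ys \<subseteq> V" using V F by auto
  ultimately show ?thesis using acc by blast
qed

lemma base_from:
  assumes O1: "\<And>cs k cs'. vb (BL#cs) \<Longrightarrow> vb (BS k # cs') \<Longrightarrow> tot (BL#cs) = tot (BS k#cs') \<Longrightarrow>
      \<exists>ys. length ys = tot (BL#cs) \<and> set ys \<subseteq> V \<and> bok E f (BL#cs) x ys \<noteq> bok E f (BS k # cs') x ys"
  and O2: "\<And>k k' cs cs'. k < k' \<Longrightarrow> vb (BS k # cs) \<Longrightarrow> vb (BS k' # cs') \<Longrightarrow> tot (BS k # cs) = tot (BS k' # cs') \<Longrightarrow>
      \<exists>ys. length ys = tot (BS k # cs) \<and> set ys \<subseteq> V \<and> bok E f (BS k # cs) x ys \<noteq> bok E f (BS k' # cs') x ys"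
  shows "\<And>b cs b' cs'. vb (b#cs) \<Longrightarrow> vb (b'#cs') \<Longrightarrow> tot (b#cs) = tot (b'#cs') \<Longrightarrow> b \<noteq> b' \<Longrightarrow>
      (\<exists>ys. length ys = tot (b#cs) \<and> set ys \<subseteq> V \<and> bok E f (b#cs) x ys \<noteq> bok E f (b'#cs') x ys)"
proof -
  fix b cs b' cs'
  assume vb: "vb (b#cs)" "vb (b'#cs')" and tt: "tot (b#cs) = tot (b'#cs')" and ne: "b \<noteq> b'"
  show "\<exists>ys. length ys = tot (b#cs) \<and> set ys \<subseteq> V \<and> bok E f (b#cs) x ys \<noteq> bok E f (b'#cs') x ys"
  proof (cases b)
    case BL
    then obtain k where b': "b' = BS k" using ne by (cases b') auto
    show ?thesis using O1[of cs k cs'] vb tt BL b' by simp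
  next
    case (BS k)
    show ?thesis
    proof (cases b')
      case BL
      obtain ys where "length ys = tot (BL#cs')" "set ys \<subseteq> V" "bok E f (BL#cs') x ys \<noteq> bok E f (BS k # cs) x ys"
        using O1[of cs' k cs] vb tt BS BL by auto
      then show ?thesis using BS BL tt by metis
    next
      case (BS k')
      then have "k < k' \<or> k' < k" using ne \<open>b = BS k\<close> by auto
      then show ?thesis
      proof
        assume "k < k'" then show ?thesis using O2[of k k' cs cs'] vb tt BS \<open>b = BS k\<close> by simp
      next
        assume "k' < k"
        obtain ys where "length ys = tot (BS k' # cs')" "set ys \<subseteq> V"
            "bok E f (BS k' # cs') x ys \<noteq> bok E f (BS k # cs) x ys"
          using O2[of k' k cs' cs] \<open>k' < k\<close> vb tt BS \<open>b = BS k\<close> by auto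
        then show ?thesis using BS \<open>b = BS k\<close> tt by metis
      qed
    qed
  qed
qed

context dg begin

lemma lower_gen:
  assumes xV: "x \<in> V" and lf: "\<And>b. leaves (f b) = bsize b"
  and fill: "\<And>b. \<exists>seg. length seg = bsize b \<and> set seg \<subseteq> V \<and> (x, hd seg) \<in> E \<and> gh E (f b) seg"
  and base: "\<And>b cs b' cs'. vb (b#cs) \<Longrightarrow> vb (b'#cs') \<Longrightarrow> tot (b#cs) = tot (b'#cs') \<Longrightarrow> b \<noteq> b' \<Longrightarrow>
      (\<exists>ys. length ys = tot (b#cs) \<and> set ys \<subseteq> V \<and> bok E f (b#cs) x ys \<noteq> bok E f (b'#cs') x ys)"
  and n: "3 \<le> n"
  shows "card (R_words (n - 1)) \<le> sp n"
proof -
  let ?m = "n - 1"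
  have m2: "2 \<le> ?m" using n by simp
  define pb where "pb w = (SOME bs. vb bs \<and> enc bs = w)" for w
  have pbw: "vb (pb w) \<and> enc (pb w) = w" if "w \<in> R_words ?m" for w
  proof -
    have "gd 0 w" using that R_gd[of ?m] m2 by auto
    then have "\<exists>bs. vb bs \<and> enc bs = w" using parse_ex by blast
    then show ?thesis unfolding pb_def by (rule someI_ex)
  qed
  have lenw: "length w = ?m" if "w \<in> R_words ?m" for w using that R_gd[of ?m] m2 by auto
  define g where "g w = opn n (bt f (pb w))" for w
  have leaf_pb: "leaves (bt f (pb w)) = n" if "w \<in> R_words ?m" for w
  proof -
    have "tot (pb w) = ?m" using pbw[OF that] lenw[OF that] length_enc[of "pb w"] by simp
    then show ?thesis using leaves_bt[of f "pb w", OF lf] n by simp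
  qed
  have sub: "g ` R_words ?m \<subseteq> opn n ` bracketings n"
    using leaf_pb unfolding g_def bracketings_def by auto
  have D: "\<And>bs bs'. vb bs \<Longrightarrow> vb bs' \<Longrightarrow> tot bs = tot bs' \<Longrightarrow> bs \<noteq> bs' \<Longrightarrow>
      \<exists>ys. length ys = tot bs \<and> set ys \<subseteq> V \<and> bok E f bs x ys \<noteq> bok E f bs' x ys"
    apply (rule dist_gen[of V x E f])
         apply (rule fill)
        apply (rule base; assumption)
       apply assumption+
    done
  have inj: "inj_on g (R_words ?m)"
  proof (rule inj_onI)
    fix w1 w2 assume w1: "w1 \<in> R_words ?m" and w2: "w2 \<in> R_words ?m" and eq: "g w1 = g w2"
    have H: "\<forall>xs. length xs = n \<and> set xs \<subseteq> V \<longrightarrow> (gh E (bt f (pb w1)) xs \<longleftrightarrow> gh E (bt f (pb w2)) xs)"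
      using eq unfolding g_def opeq[OF leaf_pb[OF w1] leaf_pb[OF w2]] .
    have "pb w1 = pb w2"
    proof (rule ccontr)
      assume ne: "pb w1 \<noteq> pb w2"
      have t1: "tot (pb w1) = ?m" using pbw[OF w1] lenw[OF w1] length_enc[of "pb w1"] by simp
      have t2: "tot (pb w2) = ?m" using pbw[OF w2] lenw[OF w2] length_enc[of "pb w2"] by simp
      have "vb (pb w1)" "vb (pb w2)" "tot (pb w1) = tot (pb w2)" using pbw[OF w1] pbw[OF w2] t1 t2 by auto
      from D[OF this ne] obtain ys where ys: "length ys = tot (pb w1)" "set ys \<subseteq> V"
        "bok E f (pb w1) x ys \<noteq> bok E f (pb w2) x ys" by blast
      have "gh E (bt f (pb w1)) (x # ys) \<longleftrightarrow> gh E (bt f (pb w2)) (x # ys)"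
        using H[rule_format, of "x # ys"] ys t1 n xV by auto
      then show False using ys gh_bt[of f, OF lf] t1 t2 by metis
    qed
    then show "w1 = w2" using pbw[OF w1] pbw[OF w2] by metis
  qed
  have "card (R_words ?m) \<le> card (opn n ` bracketings n)"
    by (rule card_inj_on_le[OF inj sub finite_ops])
  then show ?thesis by (simp add: assoc_spectrum_def)
qed

lemma lower_SB:
  assumes "x \<in> V" "u \<in> V" "v \<in> V" "(x,u) \<in> E" "(u,v) \<in> E" "(x,v) \<notin> E" "3 \<le> n"
  shows "card (R_words (n - 1)) \<le> sp n"
proof (rule lower_gen[OF assms(1), of fS])
  fix b show "\<exists>seg. length seg = bsize b \<and> set seg \<subseteq> V \<and> (x, hd seg) \<in> E \<and> gh E (fS b) seg"
    using sgS_ok[OF assms(4,5), of b] sgS_set[OF assms(2,3), of b] by blast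
next
  fix b cs b' cs'
  assume "vb (b#cs)" "vb (b'#cs')" "tot (b#cs) = tot (b'#cs')" "b \<noteq> b'"
  then show "\<exists>ys. length ys = tot (b#cs) \<and> set ys \<subseteq> V \<and> bok E fS (b#cs) x ys \<noteq> bok E fS (b'#cs') x ys"
    using base_from[of V E fS x, OF O1_SB[OF assms(4,5,6,2,3)] O2_SB[OF assms(4,5,6,2,3)]] by blast
qed (use assms in auto)

lemma lower_SW:
  assumes "x \<in> V" "w \<in> V" "z \<in> V" "t \<in> V" "(x,w) \<in> E" "(x,z) \<in> E" "(w,z) \<notin> E" "(w,t) \<in> E" "3 \<le> n"
  shows "card (R_words (n - 1)) \<le> sp n"
proof -
  obtain u0 v0 l0 where uvl: "(x,u0) \<in> E" "(x,v0) \<in> E" "(u0,v0) \<notin> E" "(v0,l0) \<in> E" "u0 \<in> V" "v0 \<in> V" "l0 \<in> V"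
  proof (cases "\<exists>t'. (z,t') \<in> E")
    case True
    then obtain t' where "(z,t') \<in> E" by blast
    then show ?thesis using that[of w z t'] assms EV by blast
  next
    case False
    then show ?thesis using that[of z w t] assms by blast
  qed
  show ?thesis
  proof (rule lower_gen[OF assms(1), of fS])
    fix b show "\<exists>seg. length seg = bsize b \<and> set seg \<subseteq> V \<and> (x, hd seg) \<in> E \<and> gh E (fS b) seg"
      using sgS_ok[OF assms(5,8), of b] sgS_set[OF assms(2,4), of b] by blast
  next
    fix b cs b' cs'
    assume "vb (b#cs)" "vb (b'#cs')" "tot (b#cs) = tot (b'#cs')" "b \<noteq> b'"
    then show "\<exists>ys. length ys = tot (b#cs) \<and> set ys \<subseteq> V \<and> bok E fS (b#cs) x ys \<noteq> bok E fS (b'#cs') x ys"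
      using base_from[of V E fS x, OF O1_SW[OF uvl(1-4) uvl(5-7)] O2_SW[OF assms(5-8) assms(2-4)]] by blast
  qed (use assms in auto)
qed

lemma lower_SL:
  assumes "x \<in> V" "u \<in> V" "(x,x) \<in> E" "(x,u) \<in> E" "\<forall>t. (u,t) \<notin> E" "3 \<le> n"
  shows "card (R_words (n - 1)) \<le> sp n"
proof (rule lower_gen[OF assms(1), of fC])
  fix b show "\<exists>seg. length seg = bsize b \<and> set seg \<subseteq> V \<and> (x, hd seg) \<in> E \<and> gh E (fC b) seg"
    using sgC_ok[OF assms(3), of b] assms(1) by (intro exI[of _ "sgC x b"]) (auto simp: sgC_def)
next
  fix b cs b' cs'
  assume "vb (b#cs)" "vb (b'#cs')" "tot (b#cs) = tot (b'#cs')" "b \<noteq> b'"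
  then show "\<exists>ys. length ys = tot (b#cs) \<and> set ys \<subseteq> V \<and> bok E fC (b#cs) x ys \<noteq> bok E fC (b'#cs') x ys"
    using base_from[of V E fC x, OF O1_C[OF assms(3,4,5,1,2)] O2_C[OF assms(3,4,5,1,2)]] by blast
qed (use assms in auto)

end

context dg begin

lemma iii_cases:
  assumes vV: "v \<in> V" and na: "\<not> assocC (comp v)" and nb: "\<not> bipE (comp v)"
  shows "(\<exists>x u w. x \<in> V \<and> u \<in> V \<and> w \<in> V \<and> (x,u) \<in> E \<and> (u,w) \<in> E \<and> (x,w) \<notin> E)
    \<or> (\<exists>x w z t. x \<in> V \<and> w \<in> V \<and> z \<in> V \<and> t \<in> V \<and> (x,w) \<in> E \<and> (x,z) \<in> E \<and> (w,z) \<notin> E \<and> (w,t) \<in> E)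
    \<or> (\<exists>x u. x \<in> V \<and> u \<in> V \<and> (x,x) \<in> E \<and> (x,u) \<in> E \<and> (\<forall>t. (u,t) \<notin> E))"
proof (rule ccontr)
  assume H: "\<not> ?thesis"
  have nB: "(x,w) \<in> E" if a: "(x,u) \<in> E" "(u,w) \<in> E" for x u w
  proof (rule ccontr)
    assume c: "(x,w) \<notin> E"
    have "x \<in> V" "u \<in> V" "w \<in> V" using a EV by auto
    then have "\<exists>x u w. x \<in> V \<and> u \<in> V \<and> w \<in> V \<and> (x,u) \<in> E \<and> (u,w) \<in> E \<and> (x,w) \<notin> E"
      using a c by blast
    with H show False by (simp only: de_Morgan_disj) blast
  qed
  have nW: "(w,z) \<in> E" if a: "(x,w) \<in> E" "(x,z) \<in> E" "(w,t) \<in> E" for x w z t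
  proof (rule ccontr)
    assume c: "(w,z) \<notin> E"
    have "x \<in> V" "w \<in> V" "z \<in> V" "t \<in> V" using a EV by auto
    then have "\<exists>x w z t. x \<in> V \<and> w \<in> V \<and> z \<in> V \<and> t \<in> V \<and> (x,w) \<in> E \<and> (x,z) \<in> E \<and> (w,z) \<notin> E \<and> (w,t) \<in> E"
      using a c by blast
    with H show False by (simp only: de_Morgan_disj) blast
  qed
  have nL: "\<exists>t. (u,t) \<in> E" if a: "(x,x) \<in> E" "(x,u) \<in> E" for x u
  proof (rule ccontr)
    assume c: "\<not> (\<exists>t. (u,t) \<in> E)"
    have "x \<in> V" "u \<in> V" using a EV by auto
    then have "\<exists>x u. x \<in> V \<and> u \<in> V \<and> (x,x) \<in> E \<and> (x,u) \<in> E \<and> (\<forall>t. (u,t) \<notin> E)"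
      using a c by blast
    with H show False by (simp only: de_Morgan_disj) blast
  qed
  let ?C = "comp v"
  obtain x y z where xyz: "x \<in> ?C" "y \<in> ?C" "z \<in> ?C" "(x,y) \<in> E" "((y,z) \<in> E) \<noteq> ((x,z) \<in> E)"
    using na unfolding assocC_def assoc_char induced_edges_def by blast
  have ysink: "\<And>t. (y,t) \<notin> E"
  proof
    fix t assume "(y,t) \<in> E"
    then have "(y,z) \<in> E \<longleftrightarrow> (x,z) \<in> E" using nW[OF xyz(4), of z t] nB[OF xyz(4), of z] by blast
    then show False using xyz(5) by blast
  qed
  have "induced_edges E ?C \<noteq> {}" using xyz unfolding induced_edges_def by blast
  then have "\<not> directed_bipartite ?C (induced_edges E ?C)" using nb unfolding bipE_def by blast
  then obtain a b c where abc: "a \<in> ?C" "b \<in> ?C" "c \<in> ?C" "(a,b) \<in> E" "(b,c) \<in> E"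
    using notbip_2 by blast
  define P where "P w \<longleftrightarrow> (\<exists>t. (w,t) \<in> E) \<and> (\<forall>t. (w,t) \<in> E \<longrightarrow> (\<exists>s. (t,s) \<in> E))" for w
  have stp: "P w'" if Pw: "P w" and ed: "(w,w') \<in> E \<union> E\<inverse>" for w w'
  proof (cases "(w,w') \<in> E")
    case True
    then show ?thesis using Pw nB unfolding P_def by blast
  next
    case False
    then have ww: "(w',w) \<in> E" using ed by blast
    obtain t0 where t0: "(w,t0) \<in> E" using Pw unfolding P_def by blast
    have "\<forall>t. (w',t) \<in> E \<longrightarrow> (\<exists>s. (t,s) \<in> E)"
    proof (intro allI impI)
      fix t assume "(w',t) \<in> E"
      then have "(w,t) \<in> E" using nW[OF ww _ t0] by blast
      then show "\<exists>s. (t,s) \<in> E" using Pw unfolding P_def by blast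
    qed
    then show ?thesis using ww unfolding P_def by blast
  qed
  have bb: "(b,b) \<in> E" using nW[OF abc(4) abc(4) abc(5)] .
  have Pb: "P b" unfolding P_def using abc(5) nL[OF bb] by blast
  have "(b,x) \<in> (E \<union> E\<inverse>)\<^sup>*" using comp_conn[OF abc(2) xyz(1)] .
  then have "P x"
  proof (induction rule: rtrancl_induct)
    case base then show ?case using Pb .
  next
    case (step w w') then show ?case using stp by blast
  qed
  then show False using xyz(4) ysink unfolding P_def by blast
qed

end

definition q3 :: "real \<Rightarrow> real" where "q3 x = x^3 - 2*x^2 + x - 1"

lemma p_factor: "(x::real)^4 - x^3 - x^2 - 1 = (x + 1) * q3 x"
  by (simp add: q3_def algebra_simps power2_eq_square power3_eq_cube power4_eq_xxxx)

lemma q3_alt: "q3 x = x * (x - 1)^2 - 1"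
  by (simp add: q3_def algebra_simps power2_eq_square power3_eq_cube)

lemma q3_neg: assumes "0 < x" "x \<le> 1.754" shows "q3 x < 0"
proof (cases "x \<le> 1")
  case True
  have h: "0 \<le> 1 - x" "1 - x < 1" using assms True by auto
  have "(1-x)*(1-x) \<le> (1-x)" using h by (intro mult_right_le_one_le) auto
  moreover have "(x - 1)^2 = (1-x)*(1-x)" by (simp add: power2_eq_square algebra_simps)
  ultimately have "(x - 1)^2 < 1" using h by linarith
  moreover have "x * (x-1)^2 \<le> 1 * (x-1)^2" using True by (intro mult_right_mono) auto
  ultimately show ?thesis unfolding q3_alt by linarith
next
  case False
  have a: "(x - 1)^2 \<le> 0.754^2" using False assms by (intro power_mono) auto
  have "x * (x-1)^2 \<le> 1.754 * 0.754^2" using a assms by (intro mult_mono) auto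
  also have "\<dots> < 1" by (simp add: power2_eq_square)
  finally show ?thesis unfolding q3_alt by linarith
qed

lemma q3_pos: assumes "1.756 \<le> x" shows "q3 x > 0"
proof -
  have a: "0.756^2 \<le> (x - 1)^2" using assms by (intro power_mono) auto
  have "1.756 * 0.756^2 \<le> x * (x-1)^2" using a assms by (intro mult_mono) auto
  moreover have "1 < (1.756::real) * 0.756^2" by (simp add: power2_eq_square)
  ultimately show ?thesis unfolding q3_alt by linarith
qed

lemma q3_mono: assumes "1 \<le> x" "x < y" shows "q3 x < q3 y"
proof -
  have "q3 y - q3 x = (y - x) * ((x-1)^2 + (y-1)^2 + x*y - 1)"
    by (simp add: q3_def algebra_simps power2_eq_square power3_eq_cube)
  moreover have "x * y > 1" using assms by (smt (verit) mult_less_cancel_left1)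
  then have "(x-1)^2 + (y-1)^2 + x*y - 1 > 0" by (smt (verit) zero_le_power2)
  ultimately show ?thesis using assms by (smt (verit) mult_pos_pos)
qed

lemma root_props:
  "(\<exists>!\<alpha>::real. \<alpha> > 0 \<and> \<alpha>^4 - \<alpha>^3 - \<alpha>^2 - 1 = 0)
   \<and> (\<forall>\<alpha>::real. \<alpha> > 0 \<and> \<alpha>^4 - \<alpha>^3 - \<alpha>^2 - 1 = 0 \<longrightarrow> 1.754 < \<alpha> \<and> \<alpha> < 1.756)"
proof -
  have iff: "\<alpha> > 0 \<and> \<alpha>^4 - \<alpha>^3 - \<alpha>^2 - 1 = 0 \<longleftrightarrow> \<alpha> > 0 \<and> q3 \<alpha> = 0" for \<alpha> :: real
    unfolding p_factor by auto
  have bnd: "1.754 < \<alpha> \<and> \<alpha> < 1.756" if "\<alpha> > 0" "q3 \<alpha> = 0" for \<alpha> :: real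
    using q3_neg[of \<alpha>] q3_pos[of \<alpha>] that by force
  have ex: "\<exists>x. 1 \<le> x \<and> x \<le> 2 \<and> q3 x = 0"
    by (rule IVT') (auto simp: q3_def intro!: continuous_intros)
  then obtain a where a: "a > 0" "q3 a = 0" by force
  have uniq: "x = a" if "x > 0" "q3 x = 0" for x
  proof (rule ccontr)
    assume "x \<noteq> a"
    then have "x < a \<or> a < x" by auto
    then show False
      using q3_mono[of x a] q3_mono[of a x] bnd[OF that] bnd[OF a] that a by force
  qed
  show ?thesis unfolding iff using a uniq bnd by blast
qed

lemma ra_bounds:
  fixes \<alpha> :: real
  assumes a1: "1 < \<alpha>" and ap: "\<alpha>^4 = \<alpha>^3 + \<alpha>^2 + 1"
  shows "\<alpha>^k / \<alpha>^3 \<le> real (ra k) \<and> real (ra k) \<le> 4 * \<alpha>^k"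
proof (induction k rule: less_induct)
  case (less k)
  show ?case
  proof (cases "k < 4")
    case True
    have r: "ra k \<ge> 1 \<and> ra k \<le> 4"
      using True by (cases k; cases "k - 1"; cases "k - 2"; cases "k - 3") (auto simp: numeral_eq_Suc)
    have "\<alpha>^k \<le> \<alpha>^3" using True a1 by (intro power_increasing) auto
    then have l: "\<alpha>^k / \<alpha>^3 \<le> 1" using a1 by simp
    have "1 \<le> \<alpha>^k" using a1 by simp
    moreover have "1 \<le> real (ra k)" "real (ra k) \<le> 4" using r by auto
    ultimately show ?thesis using l by linarith
  next
    case False
    then obtain j where j: "k = Suc (Suc (Suc (Suc j)))" by (metis add_Suc_shift add_numeral_left le_Suc_ex not_less numeral_Bit0 numeral_One numeral_plus_one plus_1_eq_Suc semiring_norm(2))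
    have IH: "\<And>i. i < k \<Longrightarrow> \<alpha>^i / \<alpha>^3 \<le> real (ra i) \<and> real (ra i) \<le> 4 * \<alpha>^i" using less by blast
    have e: "real (ra k) = real (ra (j+3)) + real (ra (j+2)) + real (ra j)"
      using j ra_rec[of j] by (simp add: numeral_eq_Suc)
    have pk: "\<alpha>^k = \<alpha>^(j+3) + \<alpha>^(j+2) + \<alpha>^j"
    proof -
      have "\<alpha>^k = \<alpha>^j * \<alpha>^4" using j by (simp add: power4_eq_xxxx)
      also have "\<dots> = \<alpha>^j * (\<alpha>^3 + \<alpha>^2 + 1)" using ap by simp
      also have "\<dots> = \<alpha>^(j+3) + \<alpha>^(j+2) + \<alpha>^j" by (simp add: power_add algebra_simps power2_eq_square power3_eq_cube)
      finally show ?thesis .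
    qed
    have i1: "j + 3 < k" "j + 2 < k" "j < k" using j by auto
    show ?thesis
      using IH[OF i1(1)] IH[OF i1(2)] IH[OF i1(3)] e pk by (simp add: add_divide_distrib)
  qed
qed

lemma theta_R:
  fixes \<alpha> :: real
  assumes a1: "1 < \<alpha>" and ap: "\<alpha>^4 = \<alpha>^3 + \<alpha>^2 + 1"
  shows "(\<lambda>n. real (card (R_words (n - 1)))) \<in> \<Theta>(\<lambda>n. \<alpha> ^ n)"
proof (rule bigthetaI')
  show "1 / \<alpha>^4 > 0" "4 / \<alpha> > 0" using a1 by auto
  show "\<forall>\<^sub>F n in at_top. 1 / \<alpha>^4 * norm (\<alpha> ^ n) \<le> norm (real (card (R_words (n - 1))))
      \<and> norm (real (card (R_words (n - 1)))) \<le> 4 / \<alpha> * norm (\<alpha> ^ n)"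
    unfolding eventually_at_top_linorder
  proof (intro exI[of _ 3] allI impI)
    fix n :: nat assume n: "3 \<le> n"
    have c: "card (R_words (n - 1)) = ra (n - 1)" using card_R[of "n - 1"] n by simp
    have b: "\<alpha>^(n-1) / \<alpha>^3 \<le> real (ra (n-1)) \<and> real (ra (n-1)) \<le> 4 * \<alpha>^(n-1)"
      using ra_bounds[OF a1 ap] .
    have pn: "\<alpha>^n = \<alpha> * \<alpha>^(n-1)" using n by (cases n) auto
    have ap0: "\<alpha> > 0" using a1 by simp
    have p4: "\<alpha>^4 = \<alpha> * \<alpha>^3" by (simp add: power3_eq_cube power4_eq_xxxx)
    have "1 / \<alpha>^4 * \<alpha>^n = \<alpha>^(n-1) / \<alpha>^3" unfolding p4 pn using ap0 by simp
    moreover have "4 / \<alpha> * \<alpha>^n = 4 * \<alpha>^(n-1)" using ap0 pn by (simp add: field_simps)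
    ultimately show "1 / \<alpha>^4 * norm (\<alpha> ^ n) \<le> norm (real (card (R_words (n - 1))))
      \<and> norm (real (card (R_words (n - 1)))) \<le> 4 / \<alpha> * norm (\<alpha> ^ n)"
      using b c ap0 by simp
  qed
qed

context dg begin

lemma cond_nGA: "cond \<Longrightarrow> \<not> GA"
proof
  assume c: cond and g: GA
  obtain v where v: "v \<in> V" "bipE (comp v)" using c unfolding cond_def by blast
  then obtain a b where ab: "(a,b) \<in> E" "a \<in> comp v" "b \<in> comp v"
    unfolding bipE_def induced_edges_def by auto
  have "a \<in> V" "b \<in> V" using ab EV by auto
  then have "(b,b) \<in> E" using g ab(1) unfolding GA_def by blast
  then show False using bip_no2[of "comp v" a b b] ab v(2) unfolding bipE_def by blast
qed

lemma ncond_comp: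
  assumes "\<not> GA" "\<not> cond"
  shows "\<exists>v\<in>V. \<not> assocC (comp v) \<and> \<not> bipE (comp v)"
proof (cases "\<exists>C\<in>comp ` V. bipE C")
  case True
  then show ?thesis using assms(2) unfolding cond_def by blast
next
  case False
  have "\<not> (\<forall>v\<in>V. assocC (comp v))" using allC_GA assms(1) by blast
  then show ?thesis using False by blast
qed

lemma lower_iii:
  assumes "\<not> GA" "\<not> cond" "3 \<le> n"
  shows "card (R_words (n - 1)) \<le> sp n"
proof -
  obtain v where v: "v \<in> V" "\<not> assocC (comp v)" "\<not> bipE (comp v)" using ncond_comp[OF assms(1,2)] by blast
  from iii_cases[OF v] show ?thesis
  proof (elim disjE exE conjE)
    fix x u w assume "x \<in> V" "u \<in> V" "w \<in> V" "(x,u) \<in> E" "(u,w) \<in> E" "(x,w) \<notin> E"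
    then show ?thesis using lower_SB assms(3) by blast
  next
    fix x w z t assume "x \<in> V" "w \<in> V" "z \<in> V" "t \<in> V" "(x,w) \<in> E" "(x,z) \<in> E" "(w,z) \<notin> E" "(w,t) \<in> E"
    then show ?thesis using lower_SW assms(3) by blast
  next
    fix x u assume "x \<in> V" "u \<in> V" "(x,x) \<in> E" "(x,u) \<in> E" "\<forall>t. (u,t) \<notin> E"
    then show ?thesis using lower_SL assms(3) by blast
  qed
qed

lemma cond_iff:
  "((\<forall>C\<in>weak_components V E.
             associative_on (ga_carrier C) (ga_op (induced_edges E C))
           \<or> (directed_bipartite C (induced_edges E C) \<and> induced_edges E C \<noteq> {}))
       \<and> (\<exists>C\<in>weak_components V E.
             directed_bipartite C (induced_edges E C) \<and> induced_edges E C \<noteq> {})) \<longleftrightarrow> cond"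
  unfolding cond_def comps_eq assocC_def bipE_def ..

end

theorem theorem8p6:
  fixes V :: "'v set" and E :: "('v \<times> 'v) set"
  assumes "E \<subseteq> V \<times> V"
  defines "s \<equiv> assoc_spectrum (ga_carrier V) (ga_op E)"
  defines "P1 \<equiv> (\<forall>n\<ge>1. s n = 1)"
  defines "P2 \<equiv> (\<forall>n\<ge>3. s n = 2)"
  defines "P3 \<equiv> (\<forall>n\<ge>3. card (R_words (n - 1)) \<le> s n)"
  shows "(P1 \<longleftrightarrow> associative_on (ga_carrier V) (ga_op E))
    \<and> (P2 \<longleftrightarrow>
         (\<forall>C\<in>weak_components V E.
             associative_on (ga_carrier C) (ga_op (induced_edges E C))
           \<or> (directed_bipartite C (induced_edges E C) \<and> induced_edges E C \<noteq> {}))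
       \<and> (\<exists>C\<in>weak_components V E.
             directed_bipartite C (induced_edges E C) \<and> induced_edges E C \<noteq> {}))
    \<and> ((P1 \<and> \<not> P2) \<or> (\<not> P1 \<and> P2) \<or> (\<not> P1 \<and> \<not> P2 \<and> P3))
    \<and> (\<exists>!\<alpha>::real. \<alpha> > 0 \<and> \<alpha>^4 - \<alpha>^3 - \<alpha>^2 - 1 = 0)
    \<and> (\<forall>\<alpha>::real. \<alpha> > 0 \<and> \<alpha>^4 - \<alpha>^3 - \<alpha>^2 - 1 = 0 \<longrightarrow>
          \<bar>\<alpha> - 1.755\<bar> < 0.001
        \<and> (\<lambda>n. real (card (R_words (n - 1)))) \<in> \<Theta>(\<lambda>n. \<alpha> ^ n))"
proof -
  interpret dg V E using assms(1) by unfold_locales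
  have s: "s = sp" unfolding s_def ..
  have main: "(P1 \<longleftrightarrow> GA) \<and> (P2 \<longleftrightarrow> cond) \<and> ((P1 \<and> \<not> P2) \<or> (\<not> P1 \<and> P2) \<or> (\<not> P1 \<and> \<not> P2 \<and> P3))"
  proof (cases GA)
    case True
    have p1: P1 unfolding P1_def s using sp_one[OF True] by blast
    have np2: "\<not> P2" unfolding P2_def s using sp_one[OF True, of 3] by auto
    have nc: "\<not> cond" using cond_nGA True by blast
    show ?thesis using p1 np2 nc True by blast
  next
    case False
    have np1: "\<not> P1" unfolding P1_def s using sp3_two[OF False] by (metis numeral_le_one_iff one_le_numeral semiring_norm(69) order.trans)
    show ?thesis
    proof (cases cond)
      case True
      have p2: P2 unfolding P2_def s using sp_two[OF True] by blast
      show ?thesis using np1 p2 True False by blast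
    next
      case nc: False
      have p3: P3 unfolding P3_def s using lower_iii[OF False nc] by blast
      have "card (R_words (4 - 1)) \<le> sp 4" using lower_iii[OF False nc, of 4] by simp
      moreover have "card (R_words (4 - 1)) = 4" using card_R[of 3] by (simp add: numeral_eq_Suc)
      ultimately have np2: "\<not> P2" unfolding P2_def s by force
      show ?thesis using np1 np2 p3 nc False by blast
    qed
  qed
  have roots: "\<forall>\<alpha>::real. \<alpha> > 0 \<and> \<alpha>^4 - \<alpha>^3 - \<alpha>^2 - 1 = 0 \<longrightarrow>
          \<bar>\<alpha> - 1.755\<bar> < 0.001
        \<and> (\<lambda>n. real (card (R_words (n - 1)))) \<in> \<Theta>(\<lambda>n. \<alpha> ^ n)"
  proof (intro allI impI)
    fix \<alpha> :: real assume a: "\<alpha> > 0 \<and> \<alpha>^4 - \<alpha>^3 - \<alpha>^2 - 1 = 0"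
    then have b: "1.754 < \<alpha> \<and> \<alpha> < 1.756" using root_props by blast
    have "\<bar>\<alpha> - 1.755\<bar> < 0.001" using b by (simp add: abs_if)
    moreover have "(\<lambda>n. real (card (R_words (n - 1)))) \<in> \<Theta>(\<lambda>n. \<alpha> ^ n)"
      using theta_R[of \<alpha>] a b by simp
    ultimately show "\<bar>\<alpha> - 1.755\<bar> < 0.001 \<and> (\<lambda>n. real (card (R_words (n - 1)))) \<in> \<Theta>(\<lambda>n. \<alpha> ^ n)" ..
  qed
  show ?thesis using main roots root_props GA_iff cond_iff by blast
qed


end
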